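(* Suppose $X\subseteq\{1,\dots,n\}$ with $|X|<n$, let $x\in X$ and $y\in\{1,\dots,n\}-X$, and assume $n\geq 2$. Let $C(X,x,y)$ be the chain complex with $C(X,x,y)_k=\mathcal P_n/J_{X-\{x\}}$ for every $k\geq 0$, whose differential $C_{k}\to C_{k-1}$ is right multiplication by $1-T_xV_{xy}$ when $k$ is odd and by $T_xV_{xy}$ when $k\geq 2$ is even, augmented by $C_0=\mathcal P_n/J_{X-\{x\}}\to\mathcal A_{X,x}$, right multiplication by $T_x$. Then $C(X,x,y)\to\mathcal A_{X,x}$ is a resolution (the augmented complex is exact), and $\mathbb 1\otimes_{\mathcal P_n}C(X,x,y)\to\mathbb 1\otimes_{\mathcal P_n}\mathcal A_{X,x}$ is also a resolution.
   Context: $R$ is a commutative ring, $\delta\in R$, and $\mathcal P_n=\mathcal P_n(R,\delta)$ is the partition algebra: the free $R$-module on set partitions ("diagrams") of $\{-n,\dots,-1,1,\dots,n\}$ (negative = left nodes, positive = right nodes), with product by stacking (identifying right nodes of the first diagram with left nodes of the second), taking the induced partition on outer nodes, and multiplying by $\delta$ for each component consisting only of middle nodes. $\mathbb 1$ is the trivial right module $R$ on which permutation diagrams (blocks all of the form $\{-i,j\}$) act as the identity and other diagrams as $0$. For $Z\subseteq\{1,\dots,n\}$, $J_Z$ is the left ideal spanned by diagrams in which among the right nodes labelled by $Z$ there is a singleton block or two distinct nodes in the same block. $A_x$ is the left submodule spanned by diagrams with the right node $x$ a singleton, and $\mathcal A_{X,x}=A_x/(A_x\cap J_{X-\{x\}})$.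 $T_x$ is the diagram with blocks $\{-j,j\}$ for $j\neq x$ and singletons $\{-x\},\{x\}$; for $x\neq y$, $V_{xy}$ is the diagram with blocks $\{-k,k\}$ for $k\neq x,y$ and the block $\{-x,-y,x,y\}$. (Right multiplication by these elements is well defined on the quotients involved.) *)

theory Defs
  imports Main "HOL-Library.Disjoint_Sets"
begin

text \<open>Nodes: left nodes -n..-1, right nodes 1..n (as integers).
  A diagram is a set partition of the nodes (a set of blocks).\<close>

definition nodes :: "nat \<Rightarrow> int set" where
  "nodes n = {- int n .. -1} \<union> {1 .. int n}"

definition diagrams :: "nat \<Rightarrow> int set set set" where
  "diagrams n = {d. partition_on (nodes n) d}"

text \<open>Stacking d1 on top of d2: right nodes of d1 are identified with left nodes of d2.
  Layer 0 = left nodes of d1, layer 1 = middle, layer 2 = right nodes of d2.\<close>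

definition emb1 :: "int \<Rightarrow> nat \<times> int" where
  "emb1 i = (if i < 0 then (0, - i) else (1, i))"

definition emb2 :: "int \<Rightarrow> nat \<times> int" where
  "emb2 i = (if i < 0 then (1, - i) else (2, i))"

definition stack_rel :: "int set set \<Rightarrow> int set set \<Rightarrow> ((nat \<times> int) \<times> (nat \<times> int)) set" where
  "stack_rel d1 d2 = (\<Union>B\<in>d1. emb1 ` B \<times> emb1 ` B) \<union> (\<Union>B\<in>d2. emb2 ` B \<times> emb2 ` B)"

definition stack_nodes :: "nat \<Rightarrow> (nat \<times> int) set" where
  "stack_nodes n = {0, 1, 2} \<times> {1 .. int n}"

definition stack_comps :: "nat \<Rightarrow> int set set \<Rightarrow> int set set \<Rightarrow> (nat \<times> int) set set" where
  "stack_comps n d1 d2 = stack_nodes n // ((stack_rel d1 d2)\<^sup>*)"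

definition unemb :: "nat \<times> int \<Rightarrow> int" where
  "unemb p = (if fst p = 0 then - snd p else snd p)"

definition dcomp :: "nat \<Rightarrow> int set set \<Rightarrow> int set set \<Rightarrow> int set set" where
  "dcomp n d1 d2 = {unemb ` (C \<inter> {p. fst p \<noteq> 1}) | C. C \<in> stack_comps n d1 d2 \<and> C \<inter> {p. fst p \<noteq> 1} \<noteq> {}}"

definition dloops :: "nat \<Rightarrow> int set set \<Rightarrow> int set set \<Rightarrow> nat" where
  "dloops n d1 d2 = card {C \<in> stack_comps n d1 d2. C \<subseteq> {p. fst p = 1}}"

text \<open>Elements of P_n: R-valued functions on diagrams supported on diagrams of size n
  (the free R-module on the diagrams).\<close>

definition palg :: "nat \<Rightarrow> (int set set \<Rightarrow> 'r::comm_ring_1) set" where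
  "palg n = {f. \<forall>d. d \<notin> diagrams n \<longrightarrow> f d = 0}"

definition basis :: "int set set \<Rightarrow> int set set \<Rightarrow> 'r::comm_ring_1" where
  "basis d = (\<lambda>e. if e = d then 1 else 0)"

definition pmult :: "nat \<Rightarrow> 'r::comm_ring_1 \<Rightarrow> (int set set \<Rightarrow> 'r) \<Rightarrow> (int set set \<Rightarrow> 'r) \<Rightarrow> (int set set \<Rightarrow> 'r)" where
  "pmult n \<delta> f g = (\<lambda>d. \<Sum>d1\<in>diagrams n. \<Sum>d2\<in>diagrams n.
      if dcomp n d1 d2 = d then f d1 * g d2 * \<delta> ^ dloops n d1 d2 else 0)"

definition padd :: "('a \<Rightarrow> 'r::comm_ring_1) \<Rightarrow> ('a \<Rightarrow> 'r) \<Rightarrow> ('a \<Rightarrow> 'r)" where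
  "padd f g = (\<lambda>d. f d + g d)"

definition psub :: "('a \<Rightarrow> 'r::comm_ring_1) \<Rightarrow> ('a \<Rightarrow> 'r) \<Rightarrow> ('a \<Rightarrow> 'r)" where
  "psub f g = (\<lambda>d. f d - g d)"

definition idd :: "nat \<Rightarrow> int set set" where
  "idd n = {{- j, j} | j. j \<in> {1 .. int n}}"

definition Tdiag :: "nat \<Rightarrow> int \<Rightarrow> int set set" where
  "Tdiag n x = {{- j, j} | j. j \<in> {1 .. int n} \<and> j \<noteq> x} \<union> {{- x}, {x}}"

definition Vdiag :: "nat \<Rightarrow> int \<Rightarrow> int \<Rightarrow> int set set" where
  "Vdiag n x y = {{- k, k} | k. k \<in> {1 .. int n} \<and> k \<noteq> x \<and> k \<noteq> y} \<union> {{- x, - y, x, y}}"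

text \<open>Permutation diagrams and the trivial module: diagrams act on 1 via eps.\<close>
definition is_perm :: "int set set \<Rightarrow> bool" where
  "is_perm d = (\<forall>B\<in>d. \<exists>i j. i > 0 \<and> j > 0 \<and> B = {- i, j})"

definition eps :: "int set set \<Rightarrow> 'r::comm_ring_1" where
  "eps d = (if is_perm d then 1 else 0)"

definition jdiag :: "int set \<Rightarrow> int set set \<Rightarrow> bool" where
  "jdiag Z d = ((\<exists>z\<in>Z. {z} \<in> d) \<or> (\<exists>z1\<in>Z. \<exists>z2\<in>Z. z1 \<noteq> z2 \<and> (\<exists>B\<in>d. z1 \<in> B \<and> z2 \<in> B)))"

definition Jideal :: "nat \<Rightarrow> int set \<Rightarrow> (int set set \<Rightarrow> 'r::comm_ring_1) set" where
  "Jideal n Z = {f \<in> palg n. \<forall>d. f d \<noteq> 0 \<longrightarrow> jdiag Z d}"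

definition Aspan :: "nat \<Rightarrow> int \<Rightarrow> (int set set \<Rightarrow> 'r::comm_ring_1) set" where
  "Aspan n x = {f \<in> palg n. \<forall>d. f d \<noteq> 0 \<longrightarrow> {x} \<in> d}"

definition rspan :: "('a \<Rightarrow> 'r::comm_ring_1) set \<Rightarrow> ('a \<Rightarrow> 'r) set" where
  "rspan S = {v. \<exists>F c. finite F \<and> F \<subseteq> S \<and> v = (\<lambda>e. \<Sum>s\<in>F. c s * s e)}"

definition setplus :: "('a \<Rightarrow> 'r::comm_ring_1) set \<Rightarrow> ('a \<Rightarrow> 'r) set \<Rightarrow> ('a \<Rightarrow> 'r) set" where
  "setplus A B = {padd a b | a b. a \<in> A \<and> b \<in> B}"

text \<open>1 \<otimes>_{P_n} (M/N) = M / (N + span{d m - eps(d) m | d diagram, m \<in> M}).\<close>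
definition tensor1 :: "nat \<Rightarrow> 'r::comm_ring_1 \<Rightarrow>
    (int set set \<Rightarrow> 'r) set \<times> (int set set \<Rightarrow> 'r) set \<Rightarrow>
    (int set set \<Rightarrow> 'r) set \<times> (int set set \<Rightarrow> 'r) set" where
  "tensor1 n \<delta> MN = (fst MN, setplus (snd MN)
      (rspan {psub (pmult n \<delta> (basis d) m) (\<lambda>e. eps d * m e) | d m. d \<in> diagrams n \<and> m \<in> fst MN}))"

text \<open>Exactness of the augmented complex ... \<rightarrow> C \<rightarrow> C \<rightarrow> C \<rightarrow> A \<rightarrow> 0, where all C_k equal the
  subquotient C, the differential C_k \<rightarrow> C_(k-1) (k \<ge> 1) is right multiplication by u k, and the
  augmentation C_0 \<rightarrow> A is right multiplication by aug (all maps given on representatives).\<close>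
definition aug_exact :: "nat \<Rightarrow> 'r::comm_ring_1 \<Rightarrow>
    (int set set \<Rightarrow> 'r) set \<times> (int set set \<Rightarrow> 'r) set \<Rightarrow>
    (int set set \<Rightarrow> 'r) set \<times> (int set set \<Rightarrow> 'r) set \<Rightarrow>
    (nat \<Rightarrow> (int set set \<Rightarrow> 'r)) \<Rightarrow> (int set set \<Rightarrow> 'r) \<Rightarrow> bool" where
  "aug_exact n \<delta> C A u aug \<longleftrightarrow>
     (\<forall>c\<in>fst A. \<exists>a\<in>fst C. psub c (pmult n \<delta> a aug) \<in> snd A) \<and>
     {a \<in> fst C. pmult n \<delta> a aug \<in> snd A} =
       {a \<in> fst C. \<exists>b\<in>fst C. psub a (pmult n \<delta> b (u 1)) \<in> snd C} \<and>
     (\<forall>k\<ge>1. {a \<in> fst C. pmult n \<delta> a (u k) \<in> snd C} =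
       {a \<in> fst C. \<exists>b\<in>fst C. psub a (pmult n \<delta> b (u (Suc k))) \<in> snd C})"

definition cdiff :: "nat \<Rightarrow> 'r::comm_ring_1 \<Rightarrow> int \<Rightarrow> int \<Rightarrow> nat \<Rightarrow> (int set set \<Rightarrow> 'r)" where
  "cdiff n \<delta> x y k =
     (if odd k then psub (basis (idd n)) (pmult n \<delta> (basis (Tdiag n x)) (basis (Vdiag n x y)))
      else pmult n \<delta> (basis (Tdiag n x)) (basis (Vdiag n x y)))"

end

theory Submission
  imports Defs
begin

lemma finite_nodes: "finite (nodes n)" by (simp add: nodes_def)

lemma diagrams_sub: "d \<in> diagrams n \<Longrightarrow> d \<subseteq> Pow (nodes n)"
  by (auto simp: diagrams_def partition_on_def)

lemma finite_diagrams: "finite (diagrams n)"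
proof -
  have "diagrams n \<subseteq> Pow (Pow (nodes n))" using diagrams_sub by blast
  thus ?thesis by (rule finite_subset) (simp add: finite_nodes)
qed

definition blk :: "int set set \<Rightarrow> int \<Rightarrow> int set" where
  "blk d i = (THE B. B \<in> d \<and> i \<in> B)"

lemma blk_eq: assumes "d \<in> diagrams n" "B \<in> d" "i \<in> B" shows "blk d i = B"
proof -
  have dj: "disjoint d" using assms(1) by (auto simp: diagrams_def partition_on_def)
  show ?thesis unfolding blk_def
  proof (rule the_equality)
    show "B \<in> d \<and> i \<in> B" using assms by auto
    fix C assume "C \<in> d \<and> i \<in> C"
    thus "C = B" using dj assms by (auto simp: disjoint_def)
  qed
qed

lemma blk_mem: assumes "d \<in> diagrams n" "i \<in> nodes n" shows "blk d i \<in> d" "i \<in> blk d i"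
proof -
  obtain B where "B \<in> d" "i \<in> B" using assms by (auto simp: diagrams_def partition_on_def)
  thus "blk d i \<in> d" "i \<in> blk d i" using blk_eq[OF assms(1)] by auto
qed

lemma block_sub: "d \<in> diagrams n \<Longrightarrow> B \<in> d \<Longrightarrow> B \<subseteq> nodes n"
  using diagrams_sub by blast

lemma block_ne: "d \<in> diagrams n \<Longrightarrow> B \<in> d \<Longrightarrow> B \<noteq> {}"
  by (auto simp: diagrams_def partition_on_def)

lemma block_disj: "d \<in> diagrams n \<Longrightarrow> B \<in> d \<Longrightarrow> C \<in> d \<Longrightarrow> i \<in> B \<Longrightarrow> i \<in> C \<Longrightarrow> B = C"
  using blk_eq by metis

lemma nodes_iff: "i \<in> nodes n \<longleftrightarrow> (i < 0 \<and> - i \<le> int n) \<or> (0 < i \<and> i \<le> int n)"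
  by (auto simp: nodes_def)

lemma SN_iff: "p \<in> stack_nodes n \<longleftrightarrow> fst p \<in> {0,1,2} \<and> 1 \<le> snd p \<and> snd p \<le> int n"
  by (cases p) (auto simp: stack_nodes_def)

lemma emb1_SN: "i \<in> nodes n \<Longrightarrow> emb1 i \<in> stack_nodes n"
  by (auto simp: emb1_def SN_iff nodes_iff)
lemma emb2_SN: "i \<in> nodes n \<Longrightarrow> emb2 i \<in> stack_nodes n"
  by (auto simp: emb2_def SN_iff nodes_iff)

lemma rel_SN: assumes "d1 \<in> diagrams n" "d2 \<in> diagrams n" "(p,q) \<in> stack_rel d1 d2"
  shows "p \<in> stack_nodes n \<and> q \<in> stack_nodes n"
proof -
  from assms(3) consider (a) B i j where "B \<in> d1" "i \<in> B" "j \<in> B" "p = emb1 i" "q = emb1 j"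
    | (b) B i j where "B \<in> d2" "i \<in> B" "j \<in> B" "p = emb2 i" "q = emb2 j"
    unfolding stack_rel_def by blast
  thus ?thesis
  proof cases
    case a thus ?thesis using block_sub[OF assms(1) a(1)] emb1_SN by blast
  next
    case b thus ?thesis using block_sub[OF assms(2) b(1)] emb2_SN by blast
  qed
qed

lemma sym_rel: "sym (stack_rel d1 d2)"
  by (auto simp: stack_rel_def sym_def)

lemma rtr_sym: "(p,q) \<in> (stack_rel d1 d2)\<^sup>* \<Longrightarrow> (q,p) \<in> (stack_rel d1 d2)\<^sup>*"
  by (meson sym_rel sym_rtrancl symD)

lemma rtr_SN: assumes "d1 \<in> diagrams n" "d2 \<in> diagrams n" "(p,q) \<in> (stack_rel d1 d2)\<^sup>*" "p \<in> stack_nodes n"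
  shows "q \<in> stack_nodes n"
  using assms(3,4) by (induction rule: rtrancl_induct) (use rel_SN[OF assms(1,2)] in blast)+

lemma comps_def2: "stack_comps n d1 d2 = (\<lambda>p. (stack_rel d1 d2)\<^sup>* `` {p}) ` stack_nodes n"
  unfolding stack_comps_def quotient_def by blast

lemma step1: "B \<in> d1 \<Longrightarrow> i \<in> B \<Longrightarrow> j \<in> B \<Longrightarrow> (emb1 i, emb1 j) \<in> (stack_rel d1 d2)\<^sup>*"
  by (rule r_into_rtrancl) (auto simp: stack_rel_def)
lemma step2: "B \<in> d2 \<Longrightarrow> i \<in> B \<Longrightarrow> j \<in> B \<Longrightarrow> (emb2 i, emb2 j) \<in> (stack_rel d1 d2)\<^sup>*"
  by (rule r_into_rtrancl) (auto simp: stack_rel_def)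

lemma unemb_inj: "p \<in> stack_nodes n \<Longrightarrow> q \<in> stack_nodes n \<Longrightarrow> fst p \<noteq> 1 \<Longrightarrow> fst q \<noteq> 1 \<Longrightarrow> unemb p = unemb q \<Longrightarrow> p = q"
proof -
  assume a: "p \<in> stack_nodes n" "q \<in> stack_nodes n" "fst p \<noteq> 1" "fst q \<noteq> 1" "unemb p = unemb q"
  obtain a1 b1 where p: "p = (a1,b1)" by (cases p)
  obtain a2 b2 where q: "q = (a2,b2)" by (cases q)
  have "a1 = 0 \<or> a1 = 2" "a2 = 0 \<or> a2 = 2" "b1 \<ge> 1" "b2 \<ge> 1" using a p q by (auto simp: SN_iff)
  thus ?thesis using a(5) p q unfolding unemb_def by (auto split: if_splits)
qed

lemma unemb_nodes: "p \<in> stack_nodes n \<Longrightarrow> unemb p \<in> nodes n"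
  by (cases p) (auto simp: SN_iff unemb_def nodes_iff)

definition outp :: "int \<Rightarrow> nat \<times> int" where
  "outp i = (if i < 0 then (0, -i) else (2, i))"

lemma outp: "i \<in> nodes n \<Longrightarrow> outp i \<in> stack_nodes n \<and> fst (outp i) \<noteq> 1 \<and> unemb (outp i) = i"
  by (auto simp: outp_def SN_iff nodes_iff unemb_def)

lemma dcomp_diagram: assumes "d1 \<in> diagrams n" "d2 \<in> diagrams n"
  shows "dcomp n d1 d2 \<in> diagrams n"
proof -
  let ?R = "(stack_rel d1 d2)\<^sup>*"
  let ?O = "{p. fst p \<noteq> 1}"
  have cl: "?R``{p} \<subseteq> stack_nodes n" if "p \<in> stack_nodes n" for p
    using rtr_SN[OF assms] that by auto
  have disj: "?R``{p} = ?R``{q}" if "a \<in> ?R``{p}" "a \<in> ?R``{q}" for p q a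
    using that by (auto intro: rtrancl_trans dest: rtr_sym)
  have D: "dcomp n d1 d2 = {unemb ` (?R``{p} \<inter> ?O) | p. p \<in> stack_nodes n \<and> ?R``{p} \<inter> ?O \<noteq> {}}"
    unfolding dcomp_def comps_def2 by blast
  show ?thesis unfolding diagrams_def mem_Collect_eq D
  proof (rule partition_onI)
    show "\<Union> {unemb ` (?R``{p} \<inter> ?O) | p. p \<in> stack_nodes n \<and> ?R``{p} \<inter> ?O \<noteq> {}} = nodes n"
    proof
      show "\<Union> {unemb ` (?R``{p} \<inter> ?O) | p. p \<in> stack_nodes n \<and> ?R``{p} \<inter> ?O \<noteq> {}} \<subseteq> nodes n"
        using cl unemb_nodes by blast
      show "nodes n \<subseteq> \<Union> {unemb ` (?R``{p} \<inter> ?O) | p. p \<in> stack_nodes n \<and> ?R``{p} \<inter> ?O \<noteq> {}}"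
      proof
        fix i assume i: "i \<in> nodes n"
        have "outp i \<in> ?R``{outp i} \<inter> ?O" using outp[OF i] by auto
        hence "i \<in> unemb ` (?R``{outp i} \<inter> ?O)" using outp[OF i] by force
        thus "i \<in> \<Union> {unemb ` (?R``{p} \<inter> ?O) | p. p \<in> stack_nodes n \<and> ?R``{p} \<inter> ?O \<noteq> {}}"
          using outp[OF i] by blast
      qed
    qed
    show "{} \<notin> {unemb ` (?R``{p} \<inter> ?O) | p. p \<in> stack_nodes n \<and> ?R``{p} \<inter> ?O \<noteq> {}}" by auto
    fix P Q assume P: "P \<in> {unemb ` (?R``{p} \<inter> ?O) | p. p \<in> stack_nodes n \<and> ?R``{p} \<inter> ?O \<noteq> {}}"
      and Q: "Q \<in> {unemb ` (?R``{p} \<inter> ?O) | p. p \<in> stack_nodes n \<and> ?R``{p} \<inter> ?O \<noteq> {}}" and ne: "P \<noteq> Q"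
    obtain p where p: "p \<in> stack_nodes n" "P = unemb ` (?R``{p} \<inter> ?O)" using P by blast
    obtain q where q: "q \<in> stack_nodes n" "Q = unemb ` (?R``{q} \<inter> ?O)" using Q by blast
    show "disjnt P Q" unfolding disjnt_def
    proof (rule ccontr)
      assume "P \<inter> Q \<noteq> {}"
      then obtain a b where a: "a \<in> ?R``{p} \<inter> ?O" and b: "b \<in> ?R``{q} \<inter> ?O" and ab: "unemb a = unemb b"
        using p q by blast
      have "a = b" using unemb_inj[OF _ _ _ _ ab] a b cl[OF p(1)] cl[OF q(1)] by blast
      hence "?R``{p} = ?R``{q}" using disj a b by blast
      thus False using ne p q by simp
    qed
  qed
qed

lemma unemb_emb1[simp]: "unemb (emb1 i) = i" by (simp add: unemb_def emb1_def)
lemma unemb_emb2[simp]: "unemb (emb2 i) = \<bar>i\<bar>" by (simp add: unemb_def emb2_def)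
lemma emb1_neg: "j \<ge> 1 \<Longrightarrow> emb1 (-j) = (0,j)" by (simp add: emb1_def)
lemma emb1_pos: "j \<ge> 1 \<Longrightarrow> emb1 j = (1,j)" by (simp add: emb1_def)
lemma emb2_neg: "j \<ge> 1 \<Longrightarrow> emb2 (-j) = (1,j)" by (simp add: emb2_def)
lemma emb2_pos: "j \<ge> 1 \<Longrightarrow> emb2 j = (2,j)" by (simp add: emb2_def)
lemma emb1_unemb: "p \<in> stack_nodes n \<Longrightarrow> fst p \<noteq> 2 \<Longrightarrow> emb1 (unemb p) = p"
  by (cases p) (auto simp: SN_iff unemb_def emb1_def)
lemma fst_emb1: "fst (emb1 i) \<noteq> 2" by (simp add: emb1_def)

lemma stack_class:
  fixes f :: "nat \<times> int \<Rightarrow> 'l" and h :: "'l \<Rightarrow> nat \<times> int"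
  assumes d1: "d1 \<in> diagrams n" and d2: "d2 \<in> diagrams n"
    and c1: "\<And>B i j. B \<in> d1 \<Longrightarrow> i \<in> B \<Longrightarrow> j \<in> B \<Longrightarrow> f (emb1 i) = f (emb1 j)"
    and c2: "\<And>B i j. B \<in> d2 \<Longrightarrow> i \<in> B \<Longrightarrow> j \<in> B \<Longrightarrow> f (emb2 i) = f (emb2 j)"
    and conn: "\<And>p. p \<in> stack_nodes n \<Longrightarrow> (p, h (f p)) \<in> (stack_rel d1 d2)\<^sup>*"
    and p: "p \<in> stack_nodes n"
  shows "(stack_rel d1 d2)\<^sup>* `` {p} = {q \<in> stack_nodes n. f q = f p}"
proof
  have "q \<in> stack_nodes n \<and> f q = f p" if "(p,q) \<in> (stack_rel d1 d2)\<^sup>*" for q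
    using that
  proof (induction rule: rtrancl_induct)
    case base thus ?case using p by simp
  next
    case (step u v)
    have "v \<in> stack_nodes n" using rel_SN[OF d1 d2 step(2)] by blast
    moreover have "f u = f v"
    proof -
      from step(2) consider (a) B i j where "B \<in> d1" "i \<in> B" "j \<in> B" "u = emb1 i" "v = emb1 j"
        | (b) B i j where "B \<in> d2" "i \<in> B" "j \<in> B" "u = emb2 i" "v = emb2 j"
        unfolding stack_rel_def by blast
      thus ?thesis by cases (use c1 c2 in metis)+
    qed
    ultimately show ?case using step(3) by simp
  qed
  thus "(stack_rel d1 d2)\<^sup>* `` {p} \<subseteq> {q \<in> stack_nodes n. f q = f p}" by blast
  show "{q \<in> stack_nodes n. f q = f p} \<subseteq> (stack_rel d1 d2)\<^sup>* `` {p}"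
  proof
    fix q assume q: "q \<in> {q \<in> stack_nodes n. f q = f p}"
    have "(p, h (f p)) \<in> (stack_rel d1 d2)\<^sup>*" using conn p by blast
    moreover have "(h (f p), q) \<in> (stack_rel d1 d2)\<^sup>*"
    proof -
      have "(q, h (f q)) \<in> (stack_rel d1 d2)\<^sup>*" using conn[of q] q by blast
      hence "(h (f q), q) \<in> (stack_rel d1 d2)\<^sup>*" by (rule rtr_sym)
      thus ?thesis using q by simp
    qed
    ultimately show "q \<in> (stack_rel d1 d2)\<^sup>* `` {p}" by (meson Image_singleton_iff rtrancl_trans)
  qed
qed

lemma stack_label:
  fixes f :: "nat \<times> int \<Rightarrow> 'l" and h :: "'l \<Rightarrow> nat \<times> int" and g :: "'l \<Rightarrow> int set"
  assumes d1: "d1 \<in> diagrams n" and d2: "d2 \<in> diagrams n"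
    and c1: "\<And>B i j. B \<in> d1 \<Longrightarrow> i \<in> B \<Longrightarrow> j \<in> B \<Longrightarrow> f (emb1 i) = f (emb1 j)"
    and c2: "\<And>B i j. B \<in> d2 \<Longrightarrow> i \<in> B \<Longrightarrow> j \<in> B \<Longrightarrow> f (emb2 i) = f (emb2 j)"
    and conn: "\<And>p. p \<in> stack_nodes n \<Longrightarrow> (p, h (f p)) \<in> (stack_rel d1 d2)\<^sup>*"
    and gg: "\<And>p. p \<in> stack_nodes n \<Longrightarrow> fst p \<noteq> 1 \<Longrightarrow>
              unemb ` {q \<in> stack_nodes n. fst q \<noteq> 1 \<and> f q = f p} = g (f p)"
  shows "dcomp n d1 d2 = (\<lambda>p. g (f p)) ` {p \<in> stack_nodes n. fst p \<noteq> 1}"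
    and "dloops n d1 d2 = card ((\<lambda>p. {q \<in> stack_nodes n. f q = f p}) `
            {p \<in> stack_nodes n. \<forall>q \<in> stack_nodes n. f q = f p \<longrightarrow> fst q = 1})"
    and "(\<And>p. p \<in> stack_nodes n \<Longrightarrow> \<exists>q \<in> stack_nodes n. fst q \<noteq> 1 \<and> f q = f p) \<Longrightarrow> dloops n d1 d2 = 0"
    and "p0 \<in> stack_nodes n \<Longrightarrow> (\<And>q. q \<in> stack_nodes n \<Longrightarrow> f q = f p0 \<Longrightarrow> fst q = 1) \<Longrightarrow>
         (\<And>p. p \<in> stack_nodes n \<Longrightarrow> (\<forall>q \<in> stack_nodes n. f q = f p \<longrightarrow> fst q = 1) \<Longrightarrow> p = p0)
         \<Longrightarrow> dloops n d1 d2 = 1"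
proof -
  let ?cl = "\<lambda>p. {q \<in> stack_nodes n. f q = f p}"
  have comps: "stack_comps n d1 d2 = ?cl ` stack_nodes n"
    unfolding comps_def2 using stack_class[OF assms(1-5)] by (auto simp: image_def)
  show "dcomp n d1 d2 = (\<lambda>p. g (f p)) ` {p \<in> stack_nodes n. fst p \<noteq> 1}"
  proof
    show "dcomp n d1 d2 \<subseteq> (\<lambda>p. g (f p)) ` {p \<in> stack_nodes n. fst p \<noteq> 1}"
    proof
      fix A assume "A \<in> dcomp n d1 d2"
      then obtain p where p: "p \<in> stack_nodes n" "A = unemb ` (?cl p \<inter> {p. fst p \<noteq> 1})"
        "?cl p \<inter> {p. fst p \<noteq> 1} \<noteq> {}"
        unfolding dcomp_def comps by blast
      then obtain q where q: "q \<in> ?cl p" "fst q \<noteq> 1" by blast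
      have "?cl p \<inter> {p. fst p \<noteq> 1} = {r \<in> stack_nodes n. fst r \<noteq> 1 \<and> f r = f q}" using q by auto
      hence "A = g (f q)" using p(2) gg[of q] q by auto
      thus "A \<in> (\<lambda>p. g (f p)) ` {p \<in> stack_nodes n. fst p \<noteq> 1}" using q by blast
    qed
    show "(\<lambda>p. g (f p)) ` {p \<in> stack_nodes n. fst p \<noteq> 1} \<subseteq> dcomp n d1 d2"
    proof
      fix A assume "A \<in> (\<lambda>p. g (f p)) ` {p \<in> stack_nodes n. fst p \<noteq> 1}"
      then obtain p where p: "p \<in> stack_nodes n" "fst p \<noteq> 1" "A = g (f p)" by blast
      have e: "?cl p \<inter> {p. fst p \<noteq> 1} = {r \<in> stack_nodes n. fst r \<noteq> 1 \<and> f r = f p}" by auto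
      have "p \<in> ?cl p \<inter> {p. fst p \<noteq> 1}" using p by auto
      moreover have "A = unemb ` (?cl p \<inter> {p. fst p \<noteq> 1})" using e gg[OF p(1,2)] p(3) by simp
      moreover have "?cl p \<in> stack_comps n d1 d2" using comps p by blast
      ultimately show "A \<in> dcomp n d1 d2" unfolding dcomp_def by blast
    qed
  qed
  have "{C \<in> stack_comps n d1 d2. C \<subseteq> {p. fst p = 1}} =
        ?cl ` {p \<in> stack_nodes n. \<forall>q \<in> stack_nodes n. f q = f p \<longrightarrow> fst q = 1}"
    unfolding comps by auto
  thus L: "dloops n d1 d2 = card (?cl ` {p \<in> stack_nodes n. \<forall>q \<in> stack_nodes n. f q = f p \<longrightarrow> fst q = 1})"
    unfolding dloops_def by simp
  show "dloops n d1 d2 = 0" if "\<And>p. p \<in> stack_nodes n \<Longrightarrow> \<exists>q \<in> stack_nodes n. fst q \<noteq> 1 \<and> f q = f p"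
  proof -
    have E: "{p \<in> stack_nodes n. \<forall>q \<in> stack_nodes n. f q = f p \<longrightarrow> fst q = 1} = {}"
      using that by fastforce
    show ?thesis unfolding L E by simp
  qed
  show "dloops n d1 d2 = 1" if a: "p0 \<in> stack_nodes n" "\<And>q. q \<in> stack_nodes n \<Longrightarrow> f q = f p0 \<Longrightarrow> fst q = 1"
    "\<And>p. p \<in> stack_nodes n \<Longrightarrow> (\<forall>q \<in> stack_nodes n. f q = f p \<longrightarrow> fst q = 1) \<Longrightarrow> p = p0"
  proof -
    have E: "{p \<in> stack_nodes n. \<forall>q \<in> stack_nodes n. f q = f p \<longrightarrow> fst q = 1} = {p0}"
      using a by blast
    show ?thesis unfolding L E by simp
  qed
qed


lemma stack_label':
  fixes f :: "nat \<times> int \<Rightarrow> 'l" and h :: "'l \<Rightarrow> nat \<times> int" and g :: "'l \<Rightarrow> int set"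
  assumes d1: "d1 \<in> diagrams n" and d2: "d2 \<in> diagrams n"
    and c1: "\<forall>B\<in>d1. \<forall>i\<in>B. \<forall>j\<in>B. f (emb1 i) = f (emb1 j)"
    and c2: "\<forall>B\<in>d2. \<forall>i\<in>B. \<forall>j\<in>B. f (emb2 i) = f (emb2 j)"
    and conn: "\<forall>p\<in>stack_nodes n. (p, h (f p)) \<in> (stack_rel d1 d2)\<^sup>*"
    and gg: "\<forall>p\<in>stack_nodes n. fst p \<noteq> 1 \<longrightarrow>
              unemb ` {q \<in> stack_nodes n. fst q \<noteq> 1 \<and> f q = f p} = g (f p)"
  shows "dcomp n d1 d2 = (\<lambda>p. g (f p)) ` {p \<in> stack_nodes n. fst p \<noteq> 1}"
    and "(\<forall>p\<in>stack_nodes n. \<exists>q \<in> stack_nodes n. fst q \<noteq> 1 \<and> f q = f p) \<Longrightarrow> dloops n d1 d2 = 0"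
    and "p0 \<in> stack_nodes n \<Longrightarrow> (\<forall>q\<in>stack_nodes n. f q = f p0 \<longrightarrow> fst q = 1) \<Longrightarrow>
         (\<forall>p\<in>stack_nodes n. (\<forall>q \<in> stack_nodes n. f q = f p \<longrightarrow> fst q = 1) \<longrightarrow> p = p0)
         \<Longrightarrow> dloops n d1 d2 = 1"
proof -
  show "dcomp n d1 d2 = (\<lambda>p. g (f p)) ` {p \<in> stack_nodes n. fst p \<noteq> 1}"
    apply (rule stack_label(1)[where f=f and h=h and g=g, OF d1 d2])
    subgoal by (rule c1[rule_format]; assumption)
    subgoal by (rule c2[rule_format]; assumption)
    subgoal by (rule conn[rule_format]; assumption)
    subgoal by (rule gg[rule_format]; assumption)
    done
  show "(\<forall>p\<in>stack_nodes n. \<exists>q \<in> stack_nodes n. fst q \<noteq> 1 \<and> f q = f p) \<Longrightarrow> dloops n d1 d2 = 0"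
    apply (rule stack_label(3)[where f=f and h=h and g=g, OF d1 d2])
    subgoal by (rule c1[rule_format]; assumption)
    subgoal by (rule c2[rule_format]; assumption)
    subgoal by (rule conn[rule_format]; assumption)
    subgoal by (rule gg[rule_format]; assumption)
    by blast+
  show "p0 \<in> stack_nodes n \<Longrightarrow> (\<forall>q\<in>stack_nodes n. f q = f p0 \<longrightarrow> fst q = 1) \<Longrightarrow>
         (\<forall>p\<in>stack_nodes n. (\<forall>q \<in> stack_nodes n. f q = f p \<longrightarrow> fst q = 1) \<longrightarrow> p = p0)
         \<Longrightarrow> dloops n d1 d2 = 1"
    apply (rule stack_label(4)[where f=f and h=h and g=g, OF d1 d2])
    subgoal by (rule c1[rule_format]; assumption)
    subgoal by (rule c2[rule_format]; assumption)
    subgoal by (rule conn[rule_format]; assumption)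
    subgoal by (rule gg[rule_format]; assumption)
    by blast+
qed

definition rep :: "int set \<Rightarrow> int" where "rep B = (SOME b. b \<in> B)"

lemma rep_mem: assumes "d \<in> diagrams n" "B \<in> d" shows "rep B \<in> B"
  using block_ne[OF assms] unfolding rep_def by (metis ex_in_conv someI_ex)

lemma conn_emb1:
  assumes d: "d \<in> diagrams n" and p: "p \<in> stack_nodes n" "fst p \<noteq> 2"
  shows "(p, emb1 (rep (blk d (unemb p)))) \<in> (stack_rel d d2)\<^sup>*"
proof -
  have u: "unemb p \<in> nodes n" using unemb_nodes[OF p(1)] .
  have "emb1 (unemb p) = p" using emb1_unemb[OF p] .
  thus ?thesis using step1[OF blk_mem(1)[OF d u] blk_mem(2)[OF d u] rep_mem[OF d blk_mem(1)[OF d u]]]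
    by simp
qed

lemma conn_emb1': 
  assumes d: "d \<in> diagrams n" and i: "i \<in> nodes n"
  shows "(emb1 i, emb1 (rep (blk d i))) \<in> (stack_rel d d2)\<^sup>*"
  using step1[OF blk_mem(1)[OF d i] blk_mem(2)[OF d i] rep_mem[OF d blk_mem(1)[OF d i]]] .

lemma outer_cases:
  assumes "q \<in> stack_nodes n" "fst q \<noteq> 1"
  obtains i where "1 \<le> i" "i \<le> int n" "q = (0,i)" | j where "1 \<le> j" "j \<le> int n" "q = (2,j)"
  using assms by (cases q) (auto simp: SN_iff)

lemma blk_iff: "d \<in> diagrams n \<Longrightarrow> B \<in> d \<Longrightarrow> i \<in> nodes n \<Longrightarrow> blk d i = B \<longleftrightarrow> i \<in> B"
  using blk_eq blk_mem by metis

lemma idd_diag: "idd n \<in> diagrams n"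
  unfolding diagrams_def mem_Collect_eq
proof (rule partition_onI)
  show "\<Union> (idd n) = nodes n"
  proof
    show "\<Union> (idd n) \<subseteq> nodes n" by (auto simp: idd_def nodes_iff)
    show "nodes n \<subseteq> \<Union> (idd n)"
    proof
      fix i assume "i \<in> nodes n"
      hence "\<bar>i\<bar> \<in> {1..int n}" "i \<in> {- \<bar>i\<bar>, \<bar>i\<bar>}" by (auto simp: nodes_iff)
      thus "i \<in> \<Union> (idd n)" unfolding idd_def by blast
    qed
  qed
  show "{} \<notin> idd n" by (auto simp: idd_def)
  fix p q assume "p \<in> idd n" "q \<in> idd n" "p \<noteq> q"
  thus "disjnt p q" by (auto simp: idd_def disjnt_def)
qed

lemma gg_common:
  assumes d: "d \<in> diagrams n" and B: "B \<in> d"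
  shows "unemb ` {q \<in> stack_nodes n. fst q \<noteq> 1 \<and> unemb q \<in> B} = B"
proof
  show "unemb ` {q \<in> stack_nodes n. fst q \<noteq> 1 \<and> unemb q \<in> B} \<subseteq> B" by auto
  show "B \<subseteq> unemb ` {q \<in> stack_nodes n. fst q \<noteq> 1 \<and> unemb q \<in> B}"
  proof
    fix i assume i: "i \<in> B"
    hence "i \<in> nodes n" using block_sub[OF d B] by blast
    from outp[OF this] i show "i \<in> unemb ` {q \<in> stack_nodes n. fst q \<noteq> 1 \<and> unemb q \<in> B}"
      by (metis (mono_tags, lifting) image_eqI mem_Collect_eq)
  qed
qed

lemma dcomp_idd:
  assumes d: "d \<in> diagrams n"
  shows "dcomp n d (idd n) = d" "dloops n d (idd n) = 0"
proof -
  let ?f = "\<lambda>p. blk d (unemb p)"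
  let ?h = "\<lambda>B. emb1 (rep B)"
  have c1: "\<And>B i j. B \<in> d \<Longrightarrow> i \<in> B \<Longrightarrow> j \<in> B \<Longrightarrow> ?f (emb1 i) = ?f (emb1 j)"
    using blk_eq[OF d] by simp
  have c2: "\<And>B i j. B \<in> idd n \<Longrightarrow> i \<in> B \<Longrightarrow> j \<in> B \<Longrightarrow> ?f (emb2 i) = ?f (emb2 j)"
    by (auto simp: idd_def)
  have conn: "(p, ?h (?f p)) \<in> (stack_rel d (idd n))\<^sup>*" if p: "p \<in> stack_nodes n" for p
  proof (cases "fst p = 2")
    case False thus ?thesis using conn_emb1[OF d p] by simp
  next
    case True
    then obtain j where j: "p = (2,j)" "1 \<le> j" "j \<le> int n" using p by (cases p) (auto simp: SN_iff)
    have B: "{-j,j} \<in> idd n" using j by (auto simp: idd_def)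
    have "(emb2 j, emb2 (-j)) \<in> (stack_rel d (idd n))\<^sup>*" by (rule step2[OF B]) auto
    hence 1: "(p, emb1 j) \<in> (stack_rel d (idd n))\<^sup>*" using j by (simp add: emb2_pos emb2_neg emb1_pos)
    have "j \<in> nodes n" using j by (auto simp: nodes_iff)
    from conn_emb1'[OF d this] have "(emb1 j, ?h (?f p)) \<in> (stack_rel d (idd n))\<^sup>*"
      using j by (simp add: unemb_def)
    with 1 show ?thesis by (rule rtrancl_trans)
  qed
  have gg: "unemb ` {q \<in> stack_nodes n. fst q \<noteq> 1 \<and> ?f q = ?f p} = id (?f p)"
    if p: "p \<in> stack_nodes n" "fst p \<noteq> 1" for p
  proof -
    have B: "?f p \<in> d" using blk_mem(1)[OF d unemb_nodes[OF p(1)]] .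
    have "{q \<in> stack_nodes n. fst q \<noteq> 1 \<and> ?f q = ?f p} = {q \<in> stack_nodes n. fst q \<noteq> 1 \<and> unemb q \<in> ?f p}"
      using blk_iff[OF d B] unemb_nodes by blast
    thus ?thesis using gg_common[OF d B] by simp
  qed
  note L = stack_label[OF d idd_diag c1 c2 conn gg]
  show "dcomp n d (idd n) = d"
  proof -
    have "(\<lambda>p. id (?f p)) ` {p \<in> stack_nodes n. fst p \<noteq> 1} = d"
    proof
      show "(\<lambda>p. id (?f p)) ` {p \<in> stack_nodes n. fst p \<noteq> 1} \<subseteq> d"
        using blk_mem(1)[OF d] unemb_nodes by auto
      show "d \<subseteq> (\<lambda>p. id (?f p)) ` {p \<in> stack_nodes n. fst p \<noteq> 1}"
      proof
        fix B assume B: "B \<in> d"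
        obtain i where i: "i \<in> B" using block_ne[OF d B] by blast
        hence "i \<in> nodes n" using block_sub[OF d B] by blast
        note o = outp[OF this]
        have "?f (outp i) = B" using o blk_eq[OF d B i] by simp
        thus "B \<in> (\<lambda>p. id (?f p)) ` {p \<in> stack_nodes n. fst p \<noteq> 1}" using o by force
      qed
    qed
    thus ?thesis using L(1) by simp
  qed
  show "dloops n d (idd n) = 0"
  proof (rule L(3))
    fix p assume "p \<in> stack_nodes n"
    thus "\<exists>q \<in> stack_nodes n. fst q \<noteq> 1 \<and> ?f q = ?f p" using outp[OF unemb_nodes] by metis
  qed
qed

definition Wdiag :: "nat \<Rightarrow> int \<Rightarrow> int \<Rightarrow> int set set" where
  "Wdiag n x y = {{- k, k} | k. k \<in> {1 .. int n} \<and> k \<noteq> x \<and> k \<noteq> y} \<union> {{- x}, {- y, x, y}}"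

definition remx :: "int \<Rightarrow> int set set \<Rightarrow> int set set" where
  "remx x d = (\<lambda>B. B - {x}) ` {B \<in> d. B \<noteq> {x}}"

lemma T_diag: assumes x: "x \<in> {1..int n}" shows "Tdiag n x \<in> diagrams n"
  unfolding diagrams_def mem_Collect_eq
proof (rule partition_onI)
  show "\<Union> (Tdiag n x) = nodes n"
  proof
    show "\<Union> (Tdiag n x) \<subseteq> nodes n" using x by (auto simp: Tdiag_def nodes_iff)
    show "nodes n \<subseteq> \<Union> (Tdiag n x)"
    proof
      fix i assume "i \<in> nodes n"
      hence a: "\<bar>i\<bar> \<in> {1..int n}" "i \<in> {- \<bar>i\<bar>, \<bar>i\<bar>}" by (auto simp: nodes_iff)
      show "i \<in> \<Union> (Tdiag n x)"
      proof (cases "\<bar>i\<bar> = x")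
        case True thus ?thesis using a by (auto simp: Tdiag_def)
      next
        case False thus ?thesis using a unfolding Tdiag_def by blast
      qed
    qed
  qed
  show "{} \<notin> Tdiag n x" by (auto simp: Tdiag_def)
  fix p q assume "p \<in> Tdiag n x" "q \<in> Tdiag n x" "p \<noteq> q"
  thus "disjnt p q" using x by (auto simp: Tdiag_def disjnt_def)
qed

lemma V_diag: assumes x: "x \<in> {1..int n}" and y: "y \<in> {1..int n}" and xy: "x \<noteq> y"
  shows "Vdiag n x y \<in> diagrams n"
  unfolding diagrams_def mem_Collect_eq
proof (rule partition_onI)
  show "\<Union> (Vdiag n x y) = nodes n"
  proof
    show "\<Union> (Vdiag n x y) \<subseteq> nodes n" using x y by (auto simp: Vdiag_def nodes_iff)
    show "nodes n \<subseteq> \<Union> (Vdiag n x y)"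
    proof
      fix i assume "i \<in> nodes n"
      hence a: "\<bar>i\<bar> \<in> {1..int n}" "i \<in> {- \<bar>i\<bar>, \<bar>i\<bar>}" by (auto simp: nodes_iff)
      show "i \<in> \<Union> (Vdiag n x y)"
      proof (cases "\<bar>i\<bar> = x \<or> \<bar>i\<bar> = y")
        case True thus ?thesis using a by (auto simp: Vdiag_def)
      next
        case False thus ?thesis using a unfolding Vdiag_def by blast
      qed
    qed
  qed
  show "{} \<notin> Vdiag n x y" by (auto simp: Vdiag_def)
  fix p q assume "p \<in> Vdiag n x y" "q \<in> Vdiag n x y" "p \<noteq> q"
  thus "disjnt p q" using x y by (auto simp: Vdiag_def disjnt_def)
qed

lemma exq:
  assumes d: "d \<in> diagrams n" and B: "B \<in> d" "B \<noteq> {x}" and x: "x \<ge> 1"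
  shows "\<exists>q \<in> stack_nodes n. fst q \<noteq> 1 \<and> q \<noteq> (2,x) \<and> unemb q \<in> B"
proof -
  obtain i where i: "i \<in> B" "i \<noteq> x" using B block_ne[OF d B(1)] by blast
  hence "i \<in> nodes n" using block_sub[OF d B(1)] by blast
  note o = outp[OF this]
  have "outp i \<noteq> (2,x)" using o i by (metis fst_conv snd_conv unemb_def zero_neq_numeral)
  thus ?thesis using o i by metis
qed

lemma outer_ne_unemb:
  assumes "q \<in> stack_nodes n" "fst q \<noteq> 1" "q \<noteq> (2,x)" "x \<ge> 1"
  shows "unemb q \<noteq> x"
  using assms by (cases rule: outer_cases[OF assms(1,2)]) (auto simp: unemb_def)

lemma unemb_eq_pos:
  assumes "q \<in> stack_nodes n" "unemb q = x" "x \<ge> 1"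
  shows "q = (1,x) \<or> q = (2,x)"
  using assms by (cases q) (auto simp: SN_iff unemb_def)

lemma dcomp_T:
  assumes d: "d \<in> diagrams n" and x: "x \<in> {1..int n}"
  shows "dcomp n d (Tdiag n x) = insert {x} (remx x d)"
    "dloops n d (Tdiag n x) = (if {x} \<in> d then 1 else 0)"
proof -
  have x1: "x \<ge> 1" using x by simp
  have xSN: "(2,x) \<in> stack_nodes n" "(1,x) \<in> stack_nodes n" using x by (auto simp: SN_iff)
  let ?f = "\<lambda>p. if p = (2,x) then None else Some (blk d (unemb p))"
  let ?h = "\<lambda>L. case L of None \<Rightarrow> (2,x) | Some B \<Rightarrow> emb1 (rep B)"
  let ?g = "\<lambda>L. case L of None \<Rightarrow> {x} | Some B \<Rightarrow> B - {x}"
  have f1: "?f (emb1 i) = Some (blk d i)" for i using fst_emb1[of i] by auto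
  have c1: "\<And>B i j. B \<in> d \<Longrightarrow> i \<in> B \<Longrightarrow> j \<in> B \<Longrightarrow> ?f (emb1 i) = ?f (emb1 j)"
    unfolding f1 using blk_eq[OF d] by simp
  have c2: "?f (emb2 i) = ?f (emb2 j)" if "B \<in> Tdiag n x" "i \<in> B" "j \<in> B" for B i j
  proof -
    from that(1) consider (a) k where "B = {-k,k}" "k \<in> {1..int n}" "k \<noteq> x" | (b) "B = {-x}" | (c) "B = {x}"
      unfolding Tdiag_def by blast
    thus ?thesis
    proof cases
      case a
      have "emb2 i \<noteq> (2,x)" "emb2 j \<noteq> (2,x)" "\<bar>i\<bar> = k" "\<bar>j\<bar> = k" using a that(2,3) by (auto simp: emb2_def)
      thus ?thesis by simp
    qed (use that in auto)
  qed
  have conn: "(p, ?h (?f p)) \<in> (stack_rel d (Tdiag n x))\<^sup>*" if p: "p \<in> stack_nodes n" for p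
  proof (cases "fst p = 2")
    case False
    hence "p \<noteq> (2,x)" by auto
    thus ?thesis using conn_emb1[OF d p False] by simp
  next
    case True
    then obtain j where j: "p = (2,j)" "1 \<le> j" "j \<le> int n" using p by (cases p) (auto simp: SN_iff)
    show ?thesis
    proof (cases "j = x")
      case True thus ?thesis using j by simp
    next
      case False
      have B: "{-j,j} \<in> Tdiag n x" using j False by (auto simp: Tdiag_def)
      have "(emb2 j, emb2 (-j)) \<in> (stack_rel d (Tdiag n x))\<^sup>*" by (rule step2[OF B]) auto
      hence 1: "(p, emb1 j) \<in> (stack_rel d (Tdiag n x))\<^sup>*" using j by (simp add: emb2_pos emb2_neg emb1_pos)
      have "j \<in> nodes n" using j by (auto simp: nodes_iff)
      from conn_emb1'[OF d this] have "(emb1 j, ?h (?f p)) \<in> (stack_rel d (Tdiag n x))\<^sup>*"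
        using j False by (simp add: unemb_def)
      with 1 show ?thesis by (rule rtrancl_trans)
    qed
  qed
  have gg: "unemb ` {q \<in> stack_nodes n. fst q \<noteq> 1 \<and> ?f q = ?f p} = ?g (?f p)"
    if p: "p \<in> stack_nodes n" "fst p \<noteq> 1" for p
  proof (cases "p = (2,x)")
    case True
    have "{q \<in> stack_nodes n. fst q \<noteq> 1 \<and> ?f q = ?f p} = {(2,x)}" using True xSN by auto
    thus ?thesis using True x1 by (simp add: unemb_def)
  next
    case False
    let ?B = "blk d (unemb p)"
    have B: "?B \<in> d" using blk_mem(1)[OF d unemb_nodes[OF p(1)]] .
    have "{q \<in> stack_nodes n. fst q \<noteq> 1 \<and> ?f q = ?f p} = {q \<in> stack_nodes n. fst q \<noteq> 1 \<and> q \<noteq> (2,x) \<and> unemb q \<in> ?B}"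
      using False blk_iff[OF d B] unemb_nodes by auto
    also have "unemb ` \<dots> = ?B - {x}"
    proof
      show "unemb ` {q \<in> stack_nodes n. fst q \<noteq> 1 \<and> q \<noteq> (2,x) \<and> unemb q \<in> ?B} \<subseteq> ?B - {x}"
        using outer_ne_unemb x1 by blast
      show "?B - {x} \<subseteq> unemb ` {q \<in> stack_nodes n. fst q \<noteq> 1 \<and> q \<noteq> (2,x) \<and> unemb q \<in> ?B}"
      proof
        fix i assume i: "i \<in> ?B - {x}"
        hence "i \<in> nodes n" using block_sub[OF d B] by blast
        note o = outp[OF this]
        have "outp i \<noteq> (2,x)" using o i by (metis fst_conv snd_conv unemb_def zero_neq_numeral DiffD2 singletonI)
        thus "i \<in> unemb ` {q \<in> stack_nodes n. fst q \<noteq> 1 \<and> q \<noteq> (2,x) \<and> unemb q \<in> ?B}"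
          using o i by (metis (mono_tags, lifting) DiffD1 image_eqI mem_Collect_eq)
      qed
    qed
    finally show ?thesis using False by simp
  qed
  have C1: "\<forall>B\<in>d. \<forall>i\<in>B. \<forall>j\<in>B. ?f (emb1 i) = ?f (emb1 j)" using c1 by blast
  have C2: "\<forall>B\<in>Tdiag n x. \<forall>i\<in>B. \<forall>j\<in>B. ?f (emb2 i) = ?f (emb2 j)" using c2 by blast
  have CONN: "\<forall>p\<in>stack_nodes n. (p, ?h (?f p)) \<in> (stack_rel d (Tdiag n x))\<^sup>*" using conn by blast
  have GG: "\<forall>p\<in>stack_nodes n. fst p \<noteq> 1 \<longrightarrow> unemb ` {q \<in> stack_nodes n. fst q \<noteq> 1 \<and> ?f q = ?f p} = ?g (?f p)"
    using gg by blast
  note L = stack_label'[where f="?f" and h="?h" and g="?g", OF d T_diag[OF x] C1 C2 CONN GG]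
  have "(\<lambda>p. ?g (?f p)) ` {p \<in> stack_nodes n. fst p \<noteq> 1} = insert {x} (remx x d)"
  proof
    show "(\<lambda>p. ?g (?f p)) ` {p \<in> stack_nodes n. fst p \<noteq> 1} \<subseteq> insert {x} (remx x d)"
    proof
      fix A assume "A \<in> (\<lambda>p. ?g (?f p)) ` {p \<in> stack_nodes n. fst p \<noteq> 1}"
      then obtain p where p: "p \<in> stack_nodes n" "fst p \<noteq> 1" "A = ?g (?f p)" by blast
      show "A \<in> insert {x} (remx x d)"
      proof (cases "p = (2,x)")
        case True thus ?thesis using p by simp
      next
        case False
        have B: "blk d (unemb p) \<in> d" "unemb p \<in> blk d (unemb p)" using blk_mem[OF d unemb_nodes[OF p(1)]] by auto
        have "unemb p \<noteq> x" using outer_ne_unemb[OF p(1,2) False x1] .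
        hence "blk d (unemb p) \<noteq> {x}" using B by auto
        thus ?thesis using B False p(3) unfolding remx_def by auto
      qed
    qed
    show "insert {x} (remx x d) \<subseteq> (\<lambda>p. ?g (?f p)) ` {p \<in> stack_nodes n. fst p \<noteq> 1}"
    proof
      fix A assume "A \<in> insert {x} (remx x d)"
      then consider "A = {x}" | B where "B \<in> d" "B \<noteq> {x}" "A = B - {x}" unfolding remx_def by blast
      thus "A \<in> (\<lambda>p. ?g (?f p)) ` {p \<in> stack_nodes n. fst p \<noteq> 1}"
      proof cases
        case 1 thus ?thesis using xSN by (auto intro!: image_eqI[where x="(2,x)"])
      next
        case 2
        obtain q where q: "q \<in> stack_nodes n" "fst q \<noteq> 1" "q \<noteq> (2,x)" "unemb q \<in> B" using exq[OF d 2(1,2) x1] by blast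
        have "blk d (unemb q) = B" using blk_eq[OF d 2(1) q(4)] .
        hence "?g (?f q) = A" using q 2 by simp
        thus ?thesis using q by blast
      qed
    qed
  qed
  thus "dcomp n d (Tdiag n x) = insert {x} (remx x d)" using L(1) by simp
  show "dloops n d (Tdiag n x) = (if {x} \<in> d then 1 else 0)"
  proof (cases "{x} \<in> d")
    case False
    have "dloops n d (Tdiag n x) = 0"
    proof (rule L(2), intro ballI)
      fix p assume p: "p \<in> stack_nodes n"
      show "\<exists>q \<in> stack_nodes n. fst q \<noteq> 1 \<and> ?f q = ?f p"
      proof (cases "p = (2,x)")
        case True thus ?thesis using p by auto
      next
        case False
        have B: "blk d (unemb p) \<in> d" using blk_mem[OF d unemb_nodes[OF p]] by auto
        hence "blk d (unemb p) \<noteq> {x}" using \<open>{x} \<notin> d\<close> by auto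
        then obtain q where q: "q \<in> stack_nodes n" "fst q \<noteq> 1" "q \<noteq> (2,x)" "unemb q \<in> blk d (unemb p)"
          using exq[OF d B _ x1] by blast
        have "blk d (unemb q) = blk d (unemb p)" using blk_eq[OF d B q(4)] .
        thus ?thesis using q False by auto
      qed
    qed
    thus ?thesis using False by simp
  next
    case True
    have "dloops n d (Tdiag n x) = 1"
    proof (rule L(3)[OF xSN(2)]; intro ballI impI)
      fix q assume q: "q \<in> stack_nodes n" "?f q = ?f (1,x)"
      have bx: "blk d x = {x}" using blk_eq[OF d True] by simp
      hence "q \<noteq> (2,x)" "blk d (unemb q) = {x}" using q(2) by (auto simp: unemb_def split: if_splits)
      hence "unemb q = x" using blk_mem(2)[OF d unemb_nodes[OF q(1)]] by auto
      thus "fst q = 1" using unemb_eq_pos[OF q(1) _ x1] \<open>q \<noteq> (2,x)\<close> by auto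
    next
      fix p assume p: "p \<in> stack_nodes n" "\<forall>q \<in> stack_nodes n. ?f q = ?f p \<longrightarrow> fst q = 1"
      from p have f1: "fst p = 1" by blast
      hence np: "p \<noteq> (2,x)" by auto
      have B: "blk d (unemb p) \<in> d" "unemb p \<in> blk d (unemb p)" using blk_mem[OF d unemb_nodes[OF p(1)]] by auto
      have "blk d (unemb p) = {x}"
      proof (rule ccontr)
        assume "blk d (unemb p) \<noteq> {x}"
        then obtain q where q: "q \<in> stack_nodes n" "fst q \<noteq> 1" "q \<noteq> (2,x)" "unemb q \<in> blk d (unemb p)"
          using exq[OF d B(1) _ x1] by blast
        have "blk d (unemb q) = blk d (unemb p)" using blk_eq[OF d B(1) q(4)] .
        thus False using q p(2) np by auto
      qed
      hence "unemb p = x" using B by auto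
      hence "p = (1,x) \<or> p = (2,x)" using unemb_eq_pos[OF p(1) _ x1] by blast
      moreover have "p \<noteq> (2,x)" using f1 by auto
      ultimately show "p = (1,x)" by blast
    qed
    thus ?thesis using True by simp
  qed
qed

lemma dcomp_TV:
  assumes x: "x \<in> {1..int n}" and y: "y \<in> {1..int n}" and xy: "x \<noteq> y"
  shows "dcomp n (Tdiag n x) (Vdiag n x y) = Wdiag n x y" "dloops n (Tdiag n x) (Vdiag n x y) = 0"
proof -
  let ?R = "(stack_rel (Tdiag n x) (Vdiag n x y))\<^sup>*"
  let ?f = "\<lambda>p::nat\<times>int. if p = (0,x) then (0,x) else (2::nat, if snd p = x then y else snd p)"
  let ?h = "\<lambda>r::nat\<times>int. r"
  let ?g = "\<lambda>r::nat\<times>int. if r = (0,x) then {-x} else if snd r = y then {-y,x,y} else {- snd r, snd r}"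
  have x1: "x \<ge> 1" and y1: "y \<ge> 1" using x y by auto
  have C1: "\<forall>B\<in>Tdiag n x. \<forall>i\<in>B. \<forall>j\<in>B. ?f (emb1 i) = ?f (emb1 j)"
  proof (intro ballI)
    fix B i j assume B: "B \<in> Tdiag n x" and ij: "i \<in> B" "j \<in> B"
    from B consider (a) k where "B = {-k,k}" "k \<in> {1..int n}" "k \<noteq> x" | (b) "B = {-x}" | (c) "B = {x}"
      unfolding Tdiag_def by blast
    thus "?f (emb1 i) = ?f (emb1 j)"
    proof cases
      case a
      have "?f (emb1 l) = (2,k)" if "l \<in> B" for l using that a by (auto simp: emb1_def)
      thus ?thesis using ij by simp
    qed (use ij in auto)
  qed
  have C2: "\<forall>B\<in>Vdiag n x y. \<forall>i\<in>B. \<forall>j\<in>B. ?f (emb2 i) = ?f (emb2 j)"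
  proof (intro ballI)
    fix B i j assume B: "B \<in> Vdiag n x y" and ij: "i \<in> B" "j \<in> B"
    from B consider (a) k where "B = {-k,k}" "k \<in> {1..int n}" "k \<noteq> x" "k \<noteq> y" | (b) "B = {-x,-y,x,y}"
      unfolding Vdiag_def by blast
    thus "?f (emb2 i) = ?f (emb2 j)"
    proof cases
      case a
      have "?f (emb2 l) = (2,k)" if "l \<in> B" for l using that a by (auto simp: emb2_def)
      thus ?thesis using ij by simp
    next
      case b
      have "?f (emb2 l) = (2,y)" if "l \<in> B" for l using that b x1 y1 by (auto simp: emb2_def)
      thus ?thesis using ij by simp
    qed
  qed
  have BV: "{-x,-y,x,y} \<in> Vdiag n x y" by (simp add: Vdiag_def)
  have vstep: "((1,j),(2,j)) \<in> ?R" if j: "j \<in> {1..int n}" for j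
  proof (cases "j = x \<or> j = y")
    case True
    have "(emb2 (-j), emb2 j) \<in> ?R" by (rule step2[OF BV]) (use True in auto)
    thus ?thesis using j by (simp add: emb2_neg emb2_pos)
  next
    case False
    have "{-j,j} \<in> Vdiag n x y" using False j by (auto simp: Vdiag_def)
    hence "(emb2 (-j), emb2 j) \<in> ?R" by (rule step2) auto
    thus ?thesis using j by (simp add: emb2_neg emb2_pos)
  qed
  have xy1: "((1,x),(2,y)) \<in> ?R"
  proof -
    have "(emb2 (-x), emb2 y) \<in> ?R" by (rule step2[OF BV]) auto
    thus ?thesis using x1 y1 by (simp add: emb2_neg emb2_pos)
  qed
  have xy2: "((2,x),(2,y)) \<in> ?R"
  proof -
    have "(emb2 x, emb2 y) \<in> ?R" by (rule step2[OF BV]) auto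
    thus ?thesis using x1 y1 by (simp add: emb2_neg emb2_pos)
  qed
  have tstep: "((0,i),(1,i)) \<in> ?R" if i: "i \<in> {1..int n}" "i \<noteq> x" for i
  proof -
    have "{-i,i} \<in> Tdiag n x" using i by (auto simp: Tdiag_def)
    hence "(emb1 (-i), emb1 i) \<in> ?R" by (rule step1) auto
    thus ?thesis using i by (simp add: emb1_neg emb1_pos)
  qed
  have CONN: "\<forall>p\<in>stack_nodes n. (p, ?h (?f p)) \<in> ?R"
  proof
    fix p assume p: "p \<in> stack_nodes n"
    obtain k j where kj: "p = (k,j)" "k = 0 \<or> k = 1 \<or> k = 2" "j \<in> {1..int n}" using p by (cases p) (auto simp: SN_iff)
    show "(p, ?h (?f p)) \<in> ?R"
    proof (cases "j = x")
      case True
      thus ?thesis using kj xy1 xy2 xy by auto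
    next
      case False
      have "?f p = (2,j)" using kj False by auto
      moreover have "(p, (2,j)) \<in> ?R"
        using kj tstep[OF kj(3) False] vstep[OF kj(3)] by (auto intro: rtrancl_trans)
      ultimately show ?thesis by simp
    qed
  qed
  have GG: "\<forall>p\<in>stack_nodes n. fst p \<noteq> 1 \<longrightarrow>
      unemb ` {q \<in> stack_nodes n. fst q \<noteq> 1 \<and> ?f q = ?f p} = ?g (?f p)"
  proof (intro ballI impI)
    fix p assume p: "p \<in> stack_nodes n" "fst p \<noteq> 1"
    show "unemb ` {q \<in> stack_nodes n. fst q \<noteq> 1 \<and> ?f q = ?f p} = ?g (?f p)"
    proof (cases "p = (0,x)")
      case True
      have "{q \<in> stack_nodes n. fst q \<noteq> 1 \<and> ?f q = ?f p} = {(0,x)}" using True x by (auto simp: SN_iff)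
      thus ?thesis using True by (simp add: unemb_def)
    next
      case False
      define m where "m = (if snd p = x then y else snd p)"
      have fp: "?f p = (2,m)" using False m_def by simp
      have m: "m \<in> {1..int n}" "m \<noteq> x" using p y xy by (cases p; auto simp: m_def SN_iff)+
      have S: "{q \<in> stack_nodes n. fst q \<noteq> 1 \<and> ?f q = ?f p} =
               {q \<in> stack_nodes n. fst q \<noteq> 1 \<and> q \<noteq> (0,x) \<and> (if snd q = x then y else snd q) = m}"
        using fp by auto
      show ?thesis
      proof (cases "m = y")
        case True
        have "{q \<in> stack_nodes n. fst q \<noteq> 1 \<and> q \<noteq> (0,x) \<and> (if snd q = x then y else snd q) = m} = {(0,y),(2,x),(2,y)}"
          using True x y xy by (auto simp: SN_iff)
        thus ?thesis using S fp True xy by (auto simp: unemb_def)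
      next
        case False
        have "{q \<in> stack_nodes n. fst q \<noteq> 1 \<and> q \<noteq> (0,x) \<and> (if snd q = x then y else snd q) = m} = {(0,m),(2,m)}"
          using False m by (auto simp: SN_iff)
        thus ?thesis using S fp False m by (auto simp: unemb_def)
      qed
    qed
  qed
  note L = stack_label'[where f="?f" and h="?h" and g="?g", OF T_diag[OF x] V_diag[OF x y xy] C1 C2 CONN GG]
  have "(\<lambda>p. ?g (?f p)) ` {p \<in> stack_nodes n. fst p \<noteq> 1} = Wdiag n x y"
  proof
    show "(\<lambda>p. ?g (?f p)) ` {p \<in> stack_nodes n. fst p \<noteq> 1} \<subseteq> Wdiag n x y"
    proof
      fix A assume "A \<in> (\<lambda>p. ?g (?f p)) ` {p \<in> stack_nodes n. fst p \<noteq> 1}"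
      then obtain p where p: "p \<in> stack_nodes n" "fst p \<noteq> 1" "A = ?g (?f p)" by blast
      obtain k j where kj: "p = (k,j)" "j \<in> {1..int n}" using p by (cases p) (auto simp: SN_iff)
      show "A \<in> Wdiag n x y"
      proof (cases "p = (0,x)")
        case True thus ?thesis using p by (simp add: Wdiag_def)
      next
        case False
        thus ?thesis using p kj xy unfolding Wdiag_def by auto
      qed
    qed
    show "Wdiag n x y \<subseteq> (\<lambda>p. ?g (?f p)) ` {p \<in> stack_nodes n. fst p \<noteq> 1}"
    proof
      fix A assume "A \<in> Wdiag n x y"
      then consider (a) k where "A = {-k,k}" "k \<in> {1..int n}" "k \<noteq> x" "k \<noteq> y" | (b) "A = {-x}" | (c) "A = {-y,x,y}"
        unfolding Wdiag_def by blast
      thus "A \<in> (\<lambda>p. ?g (?f p)) ` {p \<in> stack_nodes n. fst p \<noteq> 1}"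
      proof cases
        case a
        have "(2,k) \<in> {p \<in> stack_nodes n. fst p \<noteq> 1}" using a by (auto simp: SN_iff)
        moreover have "A = ?g (?f (2,k))" using a by simp
        ultimately show ?thesis by (rule rev_image_eqI)
      next
        case b
        have "(0,x) \<in> {p \<in> stack_nodes n. fst p \<noteq> 1}" using x by (auto simp: SN_iff)
        moreover have "A = ?g (?f (0,x))" using b by simp
        ultimately show ?thesis by (rule rev_image_eqI)
      next
        case c
        have "(2,y) \<in> {p \<in> stack_nodes n. fst p \<noteq> 1}" using y by (auto simp: SN_iff)
        moreover have "A = ?g (?f (2,y))" using c xy by simp
        ultimately show ?thesis by (rule rev_image_eqI)
      qed
    qed
  qed
  with L(1) show "dcomp n (Tdiag n x) (Vdiag n x y) = Wdiag n x y" by (rule trans)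
  show "dloops n (Tdiag n x) (Vdiag n x y) = 0"
  proof (rule L(2), intro ballI)
    fix p assume p: "p \<in> stack_nodes n"
    obtain k j where kj: "p = (k,j)" "k = 0 \<or> k = 1 \<or> k = 2" "j \<in> {1..int n}" using p by (cases p) (auto simp: SN_iff)
    show "\<exists>q\<in>stack_nodes n. fst q \<noteq> 1 \<and> ?f q = ?f p"
    proof (cases "k = 1")
      case True
      have "(2,j) \<in> stack_nodes n" using kj by (auto simp: SN_iff)
      moreover have "?f (2,j) = ?f p" using kj True by auto
      moreover have "fst (2::nat,j) \<noteq> 1" by simp
      ultimately show ?thesis by (intro bexI[where x="(2,j)"]) auto
    next
      case False
      hence "fst p \<noteq> 1" using kj by simp
      thus ?thesis using p by (intro bexI[where x=p]) auto
    qed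
  qed
qed

lemma W_diag: "x \<in> {1..int n} \<Longrightarrow> y \<in> {1..int n} \<Longrightarrow> x \<noteq> y \<Longrightarrow> Wdiag n x y \<in> diagrams n"
  using dcomp_diagram[OF T_diag V_diag] dcomp_TV(1) by metis

definition Hx :: "int \<Rightarrow> int \<Rightarrow> int set \<Rightarrow> int set" where
  "Hx x y C = (if y \<in> C then insert x C else C)"

lemma dcomp_W:
  assumes d: "d \<in> diagrams n" and x: "x \<in> {1..int n}" and y: "y \<in> {1..int n}" and xy: "x \<noteq> y"
  shows "dcomp n d (Wdiag n x y) = Hx x y ` remx x d"
    "dloops n d (Wdiag n x y) = (if {x} \<in> d then 1 else 0)"
proof -
  have x1: "x \<ge> 1" and y1: "y \<ge> 1" using x y by auto
  have xSN: "(2,x) \<in> stack_nodes n" "(1,x) \<in> stack_nodes n" using x by (auto simp: SN_iff)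
  have yn: "y \<in> nodes n" using y by (auto simp: nodes_iff)
  let ?R = "(stack_rel d (Wdiag n x y))\<^sup>*"
  let ?f = "\<lambda>p. blk d (if p = (2,x) then y else unemb p)"
  let ?h = "\<lambda>B. emb1 (rep B)"
  let ?g = "\<lambda>B. if y \<in> B then insert x (B - {x}) else B - {x}"
  have f1: "?f (emb1 i) = blk d i" for i using fst_emb1[of i] by auto
  have C1: "\<forall>B\<in>d. \<forall>i\<in>B. \<forall>j\<in>B. ?f (emb1 i) = ?f (emb1 j)"
    unfolding f1 using blk_eq[OF d] by simp
  have C2: "\<forall>B\<in>Wdiag n x y. \<forall>i\<in>B. \<forall>j\<in>B. ?f (emb2 i) = ?f (emb2 j)"
  proof (intro ballI)
    fix B i j assume B: "B \<in> Wdiag n x y" and ij: "i \<in> B" "j \<in> B"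
    from B consider (a) k where "B = {-k,k}" "k \<in> {1..int n}" "k \<noteq> x" "k \<noteq> y" | (b) "B = {-x}" | (c) "B = {-y,x,y}"
      unfolding Wdiag_def by blast
    thus "?f (emb2 i) = ?f (emb2 j)"
    proof cases
      case a
      have "?f (emb2 l) = blk d k" if "l \<in> B" for l
      proof -
        have "emb2 l \<noteq> (2,x)" "\<bar>l\<bar> = k" using that a by (auto simp: emb2_def)
        thus ?thesis by simp
      qed
      thus ?thesis using ij by simp
    next
      case c
      have "?f (emb2 l) = blk d y" if "l \<in> B" for l
      proof -
        have "l = -y \<or> l = x \<or> l = y" using that c by auto
        thus ?thesis using x1 y1 xy by (auto simp: emb2_def unemb_def)
      qed
      thus ?thesis using ij by simp
    qed (use ij in auto)
  qed
  have BW: "{-y,x,y} \<in> Wdiag n x y" by (simp add: Wdiag_def)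
  have CONN: "\<forall>p\<in>stack_nodes n. (p, ?h (?f p)) \<in> ?R"
  proof
    fix p assume p: "p \<in> stack_nodes n"
    show "(p, ?h (?f p)) \<in> ?R"
    proof (cases "fst p = 2")
      case False
      hence "p \<noteq> (2,x)" by auto
      thus ?thesis using conn_emb1[OF d p False] by simp
    next
      case True
      then obtain j where j: "p = (2,j)" "1 \<le> j" "j \<le> int n" using p by (cases p) (auto simp: SN_iff)
      have cy: "(emb1 y, ?h (blk d y)) \<in> ?R" using conn_emb1'[OF d yn] .
      show ?thesis
      proof (cases "j = x \<or> j = y")
        case True
        have "(emb2 j, emb2 (-y)) \<in> ?R" by (rule step2[OF BW]) (use True in auto)
        hence "(p, emb1 y) \<in> ?R" using j y1 by (simp add: emb2_pos emb2_neg emb1_pos)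
        moreover have "?f p = blk d y" using True j by (auto simp: unemb_def)
        ultimately show ?thesis using cy by (metis rtrancl_trans)
      next
        case False
        have B: "{-j,j} \<in> Wdiag n x y" using j False by (auto simp: Wdiag_def)
        have "(emb2 j, emb2 (-j)) \<in> ?R" by (rule step2[OF B]) auto
        hence 1: "(p, emb1 j) \<in> ?R" using j by (simp add: emb2_pos emb2_neg emb1_pos)
        have "j \<in> nodes n" using j by (auto simp: nodes_iff)
        from conn_emb1'[OF d this] have "(emb1 j, ?h (?f p)) \<in> ?R"
          using j False by (simp add: unemb_def)
        with 1 show ?thesis by (rule rtrancl_trans)
      qed
    qed
  qed
  have fq: "?f q = B \<longleftrightarrow> (q = (2,x) \<and> y \<in> B) \<or> (q \<noteq> (2,x) \<and> unemb q \<in> B)"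
    if q: "q \<in> stack_nodes n" and B: "B \<in> d" for q B
    using blk_iff[OF d B] unemb_nodes[OF q] yn by auto
  have GG: "\<forall>p\<in>stack_nodes n. fst p \<noteq> 1 \<longrightarrow>
      unemb ` {q \<in> stack_nodes n. fst q \<noteq> 1 \<and> ?f q = ?f p} = ?g (?f p)"
  proof (intro ballI impI)
    fix p assume p: "p \<in> stack_nodes n" "fst p \<noteq> 1"
    define B where "B = ?f p"
    have B: "B \<in> d" unfolding B_def using blk_mem(1)[OF d] unemb_nodes[OF p(1)] yn by auto
    have "unemb ` {q \<in> stack_nodes n. fst q \<noteq> 1 \<and> ?f q = B} = ?g B"
    proof
      show "unemb ` {q \<in> stack_nodes n. fst q \<noteq> 1 \<and> ?f q = B} \<subseteq> ?g B"
      proof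
        fix i assume "i \<in> unemb ` {q \<in> stack_nodes n. fst q \<noteq> 1 \<and> ?f q = B}"
        then obtain q where q: "q \<in> stack_nodes n" "fst q \<noteq> 1" "?f q = B" "i = unemb q" by blast
        show "i \<in> ?g B"
        proof (cases "q = (2,x)")
          case True
          hence "y \<in> B" "i = x" using fq[OF q(1) B] q by (auto simp: unemb_def)
          thus ?thesis by simp
        next
          case False
          hence "unemb q \<in> B" "unemb q \<noteq> x" using fq[OF q(1) B] q outer_ne_unemb[OF q(1,2) _ x1] by auto
          thus ?thesis using q(4) by auto
        qed
      qed
      show "?g B \<subseteq> unemb ` {q \<in> stack_nodes n. fst q \<noteq> 1 \<and> ?f q = B}"
      proof
        fix i assume i: "i \<in> ?g B"
        show "i \<in> unemb ` {q \<in> stack_nodes n. fst q \<noteq> 1 \<and> ?f q = B}"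
        proof (cases "i = x")
          case True
          hence "y \<in> B" using i by (auto split: if_splits)
          hence "?f (2,x) = B" using fq[OF xSN(1) B] by simp
          moreover have "unemb (2::nat,x) = i" using True by (simp add: unemb_def)
          ultimately show ?thesis using xSN(1) by (intro rev_image_eqI[where x="(2,x)"]) auto
        next
          case False
          hence iB: "i \<in> B" using i by (auto split: if_splits)
          hence "i \<in> nodes n" using block_sub[OF d B] by blast
          note o = outp[OF this]
          have "outp i \<noteq> (2,x)" using o False by (metis fst_conv snd_conv unemb_def zero_neq_numeral)
          hence "?f (outp i) = B" using fq[OF _ B, of "outp i"] o iB by simp
          thus ?thesis using o by (intro rev_image_eqI[where x="outp i"]) auto
        qed
      qed
    qed
    thus "unemb ` {q \<in> stack_nodes n. fst q \<noteq> 1 \<and> ?f q = ?f p} = ?g (?f p)" unfolding B_def .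
  qed
  note L = stack_label'[where f="?f" and h="?h" and g="?g", OF d W_diag[OF x y xy] C1 C2 CONN GG]
  have img: "?f ` {p \<in> stack_nodes n. fst p \<noteq> 1} = {B \<in> d. B \<noteq> {x}}"
  proof
    show "?f ` {p \<in> stack_nodes n. fst p \<noteq> 1} \<subseteq> {B \<in> d. B \<noteq> {x}}"
    proof
      fix B assume "B \<in> ?f ` {p \<in> stack_nodes n. fst p \<noteq> 1}"
      then obtain p where p: "p \<in> stack_nodes n" "fst p \<noteq> 1" "B = ?f p" by blast
      show "B \<in> {B \<in> d. B \<noteq> {x}}"
      proof (cases "p = (2,x)")
        case True
        thus ?thesis using p blk_mem[OF d yn] xy by auto
      next
        case False
        have "unemb p \<noteq> x" using outer_ne_unemb[OF p(1,2) False x1] .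
        thus ?thesis using p False blk_mem[OF d unemb_nodes[OF p(1)]] by auto
      qed
    qed
    show "{B \<in> d. B \<noteq> {x}} \<subseteq> ?f ` {p \<in> stack_nodes n. fst p \<noteq> 1}"
    proof
      fix B assume B: "B \<in> {B \<in> d. B \<noteq> {x}}"
      obtain q where q: "q \<in> stack_nodes n" "fst q \<noteq> 1" "q \<noteq> (2,x)" "unemb q \<in> B"
        using exq[OF d _ _ x1, of B] B by blast
      have "?f q = B" using fq[OF q(1), of B] B q by auto
      thus "B \<in> ?f ` {p \<in> stack_nodes n. fst p \<noteq> 1}" using q by (intro rev_image_eqI[where x=q]) auto
    qed
  qed
  have "(\<lambda>p. ?g (?f p)) ` {p \<in> stack_nodes n. fst p \<noteq> 1} = ?g ` {B \<in> d. B \<noteq> {x}}"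
    unfolding img[symmetric] image_image ..
  also have "\<dots> = Hx x y ` remx x d"
    unfolding remx_def image_image Hx_def using xy by (intro image_cong) auto
  finally have "(\<lambda>p. ?g (?f p)) ` {p \<in> stack_nodes n. fst p \<noteq> 1} = Hx x y ` remx x d" .
  with L(1) show "dcomp n d (Wdiag n x y) = Hx x y ` remx x d" by (rule trans)
  show "dloops n d (Wdiag n x y) = (if {x} \<in> d then 1 else 0)"
  proof (cases "{x} \<in> d")
    case False
    have "dloops n d (Wdiag n x y) = 0"
    proof (rule L(2), intro ballI)
      fix p assume p: "p \<in> stack_nodes n"
      show "\<exists>q \<in> stack_nodes n. fst q \<noteq> 1 \<and> ?f q = ?f p"
      proof (cases "p = (2,x)")
        case True thus ?thesis using p by auto
      next
        case False
        have B: "blk d (unemb p) \<in> d" using blk_mem[OF d unemb_nodes[OF p]] by auto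
        hence "blk d (unemb p) \<noteq> {x}" using \<open>{x} \<notin> d\<close> by auto
        then obtain q where q: "q \<in> stack_nodes n" "fst q \<noteq> 1" "q \<noteq> (2,x)" "unemb q \<in> blk d (unemb p)"
          using exq[OF d B _ x1] by blast
        have "blk d (unemb q) = blk d (unemb p)" using blk_eq[OF d B q(4)] .
        thus ?thesis using q False by auto
      qed
    qed
    thus ?thesis using False by simp
  next
    case True
    have bx: "blk d x = {x}" using blk_eq[OF d True] by simp
    have "dloops n d (Wdiag n x y) = 1"
    proof (rule L(3)[OF xSN(2)]; intro ballI impI)
      fix q assume q: "q \<in> stack_nodes n" "?f q = ?f (1,x)"
      have "?f q = {x}" using q(2) bx by (simp add: unemb_def)
      hence "q \<noteq> (2,x) \<and> unemb q \<in> {x}" using fq[OF q(1) True] xy by auto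
      hence "q \<noteq> (2,x)" "unemb q = x" by auto
      hence "q = (1,x)" using unemb_eq_pos[OF q(1) _ x1] by blast
      thus "fst q = 1" by simp
    next
      fix p assume p: "p \<in> stack_nodes n" "\<forall>q \<in> stack_nodes n. ?f q = ?f p \<longrightarrow> fst q = 1"
      from p have f1: "fst p = 1" by blast
      hence np: "p \<noteq> (2,x)" by auto
      have B: "blk d (unemb p) \<in> d" "unemb p \<in> blk d (unemb p)" using blk_mem[OF d unemb_nodes[OF p(1)]] by auto
      have "blk d (unemb p) = {x}"
      proof (rule ccontr)
        assume "blk d (unemb p) \<noteq> {x}"
        then obtain q where q: "q \<in> stack_nodes n" "fst q \<noteq> 1" "q \<noteq> (2,x)" "unemb q \<in> blk d (unemb p)"
          using exq[OF d B(1) _ x1] by blast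
        have "blk d (unemb q) = blk d (unemb p)" using blk_eq[OF d B(1) q(4)] .
        thus False using q p(2) np by auto
      qed
      hence "unemb p = x" using B by auto
      hence "p = (1,x) \<or> p = (2,x)" using unemb_eq_pos[OF p(1) _ x1] by blast
      thus "p = (1,x)" using np by blast
    qed
    thus ?thesis using True by simp
  qed
qed

lemma basis_palg: "m \<in> diagrams n \<Longrightarrow> basis m \<in> palg n"
  by (auto simp: basis_def palg_def)

lemma pmult_basis_right:
  assumes m: "m \<in> diagrams n"
  shows "pmult n \<delta> b (basis m) = (\<lambda>f. \<Sum>d\<in>diagrams n. if dcomp n d m = f then b d * \<delta> ^ dloops n d m else 0)"
proof (rule ext)
  fix f
  have "(\<Sum>d2\<in>diagrams n. if dcomp n d1 d2 = f then b d1 * basis m d2 * \<delta> ^ dloops n d1 d2 else 0)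
        = (if dcomp n d1 m = f then b d1 * \<delta> ^ dloops n d1 m else 0)" for d1
  proof -
    have "(\<Sum>d2\<in>diagrams n. if dcomp n d1 d2 = f then b d1 * basis m d2 * \<delta> ^ dloops n d1 d2 else 0)
        = (\<Sum>d2\<in>diagrams n. if d2 = m then (if dcomp n d1 m = f then b d1 * \<delta> ^ dloops n d1 m else 0) else 0)"
      by (rule sum.cong) (auto simp: basis_def)
    also have "\<dots> = (if dcomp n d1 m = f then b d1 * \<delta> ^ dloops n d1 m else 0)"
      using m finite_diagrams by simp
    finally show ?thesis .
  qed
  thus "pmult n \<delta> b (basis m) f = (\<Sum>d\<in>diagrams n. if dcomp n d m = f then b d * \<delta> ^ dloops n d m else 0)"
    unfolding pmult_def by simp
qed

lemma pmult_basis_basis: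
  assumes p: "p \<in> diagrams n" and m: "m \<in> diagrams n"
  shows "pmult n \<delta> (basis p) (basis m) = (\<lambda>f. if dcomp n p m = f then \<delta> ^ dloops n p m else 0)"
proof (rule ext)
  fix f
  have "(\<Sum>d\<in>diagrams n. if dcomp n d m = f then basis p d * \<delta> ^ dloops n d m else 0)
       = (\<Sum>d\<in>diagrams n. if d = p then (if dcomp n p m = f then \<delta> ^ dloops n p m else 0) else 0)"
    by (rule sum.cong) (auto simp: basis_def)
  also have "\<dots> = (if dcomp n p m = f then \<delta> ^ dloops n p m else 0)" using p finite_diagrams by simp
  finally show "pmult n \<delta> (basis p) (basis m) f = (if dcomp n p m = f then \<delta> ^ dloops n p m else 0)"
    unfolding pmult_basis_right[OF m] .
qed

lemma pmult_idd:
  assumes b: "b \<in> palg n"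
  shows "pmult n \<delta> b (basis (idd n)) = b"
proof (rule ext)
  fix f
  have "pmult n \<delta> b (basis (idd n)) f = (\<Sum>d\<in>diagrams n. if d = f then b d else 0)"
    unfolding pmult_basis_right[OF idd_diag] by (rule sum.cong) (auto simp: dcomp_idd)
  also have "\<dots> = (if f \<in> diagrams n then b f else 0)"
    using finite_diagrams by (simp add: sum.delta')
  also have "\<dots> = b f" using b by (auto simp: palg_def)
  finally show "pmult n \<delta> b (basis (idd n)) f = b f" .
qed

lemma pmult_psub_left: "pmult n \<delta> (psub a b) m = psub (pmult n \<delta> a m) (pmult n \<delta> b m)"
proof (rule ext)
  fix d
  have e: "(if dcomp n d1 d2 = d then (a d1 - b d1) * m d2 * \<delta> ^ dloops n d1 d2 else 0)
    = (if dcomp n d1 d2 = d then a d1 * m d2 * \<delta> ^ dloops n d1 d2 else 0)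
    - (if dcomp n d1 d2 = d then b d1 * m d2 * \<delta> ^ dloops n d1 d2 else 0)" for d1 d2
    by (simp add: left_diff_distrib)
  show "pmult n \<delta> (psub a b) m d = psub (pmult n \<delta> a m) (pmult n \<delta> b m) d"
    unfolding pmult_def psub_def by (simp only: e sum_subtractf)
qed

lemma pmult_psub_right: "pmult n \<delta> a (psub u v) = psub (pmult n \<delta> a u) (pmult n \<delta> a v)"
proof (rule ext)
  fix d
  have e: "(if dcomp n d1 d2 = d then a d1 * (u d2 - v d2) * \<delta> ^ dloops n d1 d2 else 0)
    = (if dcomp n d1 d2 = d then a d1 * u d2 * \<delta> ^ dloops n d1 d2 else 0)
    - (if dcomp n d1 d2 = d then a d1 * v d2 * \<delta> ^ dloops n d1 d2 else 0)" for d1 d2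
    by (simp add: left_diff_distrib right_diff_distrib)
  show "pmult n \<delta> a (psub u v) d = psub (pmult n \<delta> a u) (pmult n \<delta> a v) d"
    unfolding pmult_def psub_def by (simp only: e sum_subtractf)
qed

lemma pmult_zero_left: "pmult n (\<delta>::'r::comm_ring_1) (\<lambda>e. 0) m = (\<lambda>e. 0)"
  unfolding pmult_def by (intro ext sum.neutral ballI) simp

lemma pmult_basis_palg:
  assumes m: "m \<in> diagrams n" shows "pmult n \<delta> b (basis m) \<in> palg n"
proof -
  have "pmult n \<delta> b (basis m) f = 0" if f: "f \<notin> diagrams n" for f
  proof -
    have "dcomp n d m \<noteq> f" if "d \<in> diagrams n" for d using dcomp_diagram[OF that m] f by auto
    thus ?thesis unfolding pmult_basis_right[OF m] by simp
  qed
  thus ?thesis by (auto simp: palg_def)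
qed

lemma pmult_lin_basis:
  assumes m: "m \<in> diagrams n"
  shows "pmult n \<delta> a (basis m) = (\<lambda>f. \<Sum>d\<in>diagrams n. a d * pmult n \<delta> (basis d) (basis m) f)"
proof -
  have "(\<lambda>f. \<Sum>d\<in>diagrams n. if dcomp n d m = f then a d * \<delta> ^ dloops n d m else 0)
      = (\<lambda>f. \<Sum>d\<in>diagrams n. a d * pmult n \<delta> (basis d) (basis m) f)"
  proof (rule ext, rule sum.cong[OF refl])
    fix f d assume "d \<in> diagrams n"
    thus "(if dcomp n d m = f then a d * \<delta> ^ dloops n d m else 0) = a d * pmult n \<delta> (basis d) (basis m) f"
      by (simp add: pmult_basis_basis[OF _ m])
  qed
  with pmult_basis_right[OF m, of \<delta> a] show ?thesis by (rule trans)
qed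

lemma rspan_zero: "(\<lambda>e. 0) \<in> rspan S"
  unfolding rspan_def by (rule CollectI, rule exI[where x="{}"], rule exI[where x="\<lambda>_. 0"]) simp

lemma rspan_gen: "s \<in> S \<Longrightarrow> s \<in> rspan S"
  unfolding rspan_def by (rule CollectI, rule exI[where x="{s}"], rule exI[where x="\<lambda>_. 1"]) simp

lemma rspan_scale:
  assumes "u \<in> rspan S" shows "(\<lambda>e. k * u e) \<in> rspan S"
proof -
  obtain F c where F: "finite F" "F \<subseteq> S" "u = (\<lambda>e. \<Sum>s\<in>F. c s * s e)" using assms unfolding rspan_def mem_Collect_eq by (elim exE conjE) blast
  have e: "(\<lambda>e. k * u e) = (\<lambda>e. \<Sum>s\<in>F. (k * c s) * s e)" using F(3) by (simp add: sum_distrib_left mult.assoc)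
  show ?thesis unfolding rspan_def
    by (rule CollectI, rule exI[where x=F], rule exI[where x="\<lambda>s. k * c s"]) (use F(1,2) e in simp)
qed

lemma rspan_add:
  assumes "u \<in> rspan S" "v \<in> rspan S" shows "padd u v \<in> rspan S"
proof -
  obtain F c where F: "finite F" "F \<subseteq> S" "u = (\<lambda>e. \<Sum>s\<in>F. c s * s e)" using assms(1) unfolding rspan_def mem_Collect_eq by (elim exE conjE) blast
  obtain G d where G: "finite G" "G \<subseteq> S" "v = (\<lambda>e. \<Sum>s\<in>G. d s * s e)" using assms(2) unfolding rspan_def mem_Collect_eq by (elim exE conjE) blast
  define k where "k s = (if s \<in> F then c s else 0) + (if s \<in> G then d s else 0)" for s
  have eq: "padd u v = (\<lambda>e. \<Sum>s\<in>F \<union> G. k s * s e)"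
  proof (rule ext)
    fix e
    have "(\<Sum>s\<in>F \<union> G. k s * s e) = (\<Sum>s\<in>F \<union> G. (if s \<in> F then c s * s e else 0)) + (\<Sum>s\<in>F \<union> G. (if s \<in> G then d s * s e else 0))"
      unfolding k_def sum.distrib[symmetric] by (rule sum.cong) (auto simp: distrib_right)
    also have "(\<Sum>s\<in>F \<union> G. (if s \<in> F then c s * s e else 0)) = (\<Sum>s\<in>F. c s * s e)"
      using F(1) G(1) by (simp add: sum.inter_restrict[symmetric] Int_absorb1)
    also have "(\<Sum>s\<in>F \<union> G. (if s \<in> G then d s * s e else 0)) = (\<Sum>s\<in>G. d s * s e)"
      using F(1) G(1) by (simp add: sum.inter_restrict[symmetric] Int_absorb1)
    finally show "padd u v e = (\<Sum>s\<in>F \<union> G. k s * s e)" using F(3) G(3) by (simp add: padd_def)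
  qed
  show ?thesis unfolding rspan_def
    by (rule CollectI, rule exI[where x="F \<union> G"], rule exI[where x=k]) (use F(1,2) G(1,2) eq in simp)
qed

lemma rspan_sub:
  assumes "u \<in> rspan S" "v \<in> rspan S" shows "psub u v \<in> rspan S"
proof -
  have "psub u v = padd u (\<lambda>e. (-1) * v e)" by (simp add: psub_def padd_def fun_eq_iff)
  moreover have "padd u (\<lambda>e. (-1) * v e) \<in> rspan S" by (rule rspan_add[OF assms(1) rspan_scale[OF assms(2)]])
  ultimately show ?thesis by simp
qed

lemma rspan_sum:
  assumes "finite I" "\<And>i. i \<in> I \<Longrightarrow> k i \<noteq> 0 \<Longrightarrow> v i \<in> rspan S"
  shows "(\<lambda>e. \<Sum>i\<in>I. k i * v i e) \<in> rspan S"
  using assms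
proof (induction I rule: finite_induct)
  case empty thus ?case using rspan_zero by simp
next
  case (insert i I)
  have IH: "(\<lambda>e. \<Sum>i\<in>I. k i * v i e) \<in> rspan S" using insert by blast
  have eq: "(\<lambda>e. \<Sum>i\<in>insert i I. k i * v i e) = padd (\<lambda>e. k i * v i e) (\<lambda>e. \<Sum>i\<in>I. k i * v i e)"
    using insert(1,2) by (simp add: padd_def fun_eq_iff)
  show ?case
  proof (cases "k i = 0")
    case True
    have "(\<lambda>e. \<Sum>i\<in>insert i I. k i * v i e) = (\<lambda>e. \<Sum>i\<in>I. k i * v i e)"
      using insert(1,2) True by simp
    thus ?thesis using IH by simp
  next
    case False
    have "v i \<in> rspan S" using insert(4) False by blast
    thus ?thesis unfolding eq by (rule rspan_add[OF rspan_scale IH])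
  qed
qed

lemma remx_props: assumes d: "d \<in> diagrams n" shows "\<forall>C\<in>remx x d. x \<notin> C \<and> C \<noteq> {}"
proof
  fix C assume "C \<in> remx x d"
  then obtain B where B: "B \<in> d" "B \<noteq> {x}" "C = B - {x}" unfolding remx_def by blast
  have "B \<noteq> {}" using block_ne[OF d B(1)] .
  thus "x \<notin> C \<and> C \<noteq> {}" using B by auto
qed

lemma remx_insert: assumes r: "\<forall>C\<in>r. x \<notin> C \<and> C \<noteq> {}" shows "remx x (insert {x} r) = r"
proof -
  have "{B \<in> insert {x} r. B \<noteq> {x}} = r" using r by auto
  moreover have "(\<lambda>B. B - {x}) ` r = r"
  proof -
    have "(\<lambda>B. B - {x}) ` r = (\<lambda>B. B) ` r" using r by (intro image_cong) auto
    thus ?thesis by simp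
  qed
  ultimately show ?thesis unfolding remx_def by simp
qed

lemma Hx_ne: "x \<notin> C \<Longrightarrow> C \<noteq> {} \<Longrightarrow> Hx x y C \<noteq> {x}"
  unfolding Hx_def by auto

lemma remx_H: assumes r: "\<forall>C\<in>r. x \<notin> C \<and> C \<noteq> {}" shows "remx x (Hx x y ` r) = r"
proof -
  have "{B \<in> Hx x y ` r. B \<noteq> {x}} = Hx x y ` r" using r Hx_ne by blast
  moreover have "(\<lambda>B. B - {x}) ` (Hx x y ` r) = r"
  proof -
    have "(\<lambda>B. B - {x}) ` (Hx x y ` r) = (\<lambda>B. B) ` r" unfolding image_image
      using r by (intro image_cong) (auto simp: Hx_def)
    thus ?thesis by simp
  qed
  ultimately show ?thesis unfolding remx_def by simp
qed

lemma Hx_no_single: "\<forall>C\<in>r. x \<notin> C \<and> C \<noteq> {} \<Longrightarrow> {x} \<notin> Hx x y ` r"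
  using Hx_ne by (metis (no_types, lifting) imageE)

lemma T_fix: assumes d: "d \<in> diagrams n" and x: "{x} \<in> d" shows "insert {x} (remx x d) = d"
proof -
  have nx: "x \<notin> B" if "B \<in> d" "B \<noteq> {x}" for B using block_disj[OF d that(1) x] that(2) by auto
  have "(\<lambda>B. B - {x}) ` {B \<in> d. B \<noteq> {x}} = (\<lambda>B. B) ` {B \<in> d. B \<noteq> {x}}"
    using nx by (intro image_cong) auto
  hence "remx x d = {B \<in> d. B \<noteq> {x}}" unfolding remx_def by simp
  thus ?thesis using x by auto
qed

lemma Hx_mem: "z \<in> Hx x y C \<Longrightarrow> z \<noteq> x \<Longrightarrow> z \<in> C"
  unfolding Hx_def by (cases "y \<in> C") auto

lemma jd_ins: assumes "x \<notin> Z" shows "jdiag Z (insert {x} r) \<longleftrightarrow> jdiag Z r"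
proof
  assume "jdiag Z (insert {x} r)"
  then consider (a) z where "z \<in> Z" "{z} \<in> insert {x} r"
    | (b) z1 z2 B where "z1 \<in> Z" "z2 \<in> Z" "z1 \<noteq> z2" "B \<in> insert {x} r" "z1 \<in> B" "z2 \<in> B"
    unfolding jdiag_def by blast
  thus "jdiag Z r"
  proof cases
    case a
    have "{z} \<noteq> {x}" using a assms by auto
    hence "{z} \<in> r" using a by simp
    thus ?thesis using a unfolding jdiag_def by blast
  next
    case b
    have "B \<noteq> {x}" using b by auto
    hence "B \<in> r" using b by simp
    thus ?thesis using b unfolding jdiag_def by blast
  qed
next
  assume "jdiag Z r" thus "jdiag Z (insert {x} r)" unfolding jdiag_def by blast
qed

lemma jd_H: assumes "x \<notin> Z" "y \<notin> Z"
  shows "jdiag Z (Hx x y ` r) \<longleftrightarrow> jdiag Z r"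
proof
  assume "jdiag Z (Hx x y ` r)"
  then consider (a) z where "z \<in> Z" "{z} \<in> Hx x y ` r"
    | (b) z1 z2 C where "z1 \<in> Z" "z2 \<in> Z" "z1 \<noteq> z2" "C \<in> r" "z1 \<in> Hx x y C" "z2 \<in> Hx x y C"
    unfolding jdiag_def by blast
  thus "jdiag Z r"
  proof cases
    case a
    then obtain C where C: "C \<in> r" "{z} = Hx x y C" by blast
    have "y \<notin> C"
    proof
      assume "y \<in> C"
      hence "Hx x y C = insert x C" by (simp add: Hx_def)
      hence "x \<in> {z}" using C(2) by simp
      hence "x = z" by simp
      thus False using a assms(1) by simp
    qed
    hence "{z} = C" using C(2) by (simp add: Hx_def)
    hence "{z} \<in> r" using C(1) by simp
    thus ?thesis using a unfolding jdiag_def by blast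
  next
    case b
    have "z1 \<noteq> x" "z2 \<noteq> x" using b assms(1) by auto
    hence "z1 \<in> C" "z2 \<in> C" using b Hx_mem by metis+
    thus ?thesis using b unfolding jdiag_def by blast
  qed
next
  assume "jdiag Z r"
  then consider (a) z where "z \<in> Z" "{z} \<in> r"
    | (b) z1 z2 C where "z1 \<in> Z" "z2 \<in> Z" "z1 \<noteq> z2" "C \<in> r" "z1 \<in> C" "z2 \<in> C"
    unfolding jdiag_def by blast
  thus "jdiag Z (Hx x y ` r)"
  proof cases
    case a
    have "y \<notin> {z}" using a assms(2) by auto
    hence "Hx x y {z} = {z}" by (simp add: Hx_def)
    hence "{z} \<in> Hx x y ` r" using a(2) by (metis image_eqI)
    thus ?thesis using a unfolding jdiag_def by blast
  next
    case b
    have "C \<subseteq> Hx x y C" by (auto simp: Hx_def)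
    hence "z1 \<in> Hx x y C" "z2 \<in> Hx x y C" "Hx x y C \<in> Hx x y ` r" using b by auto
    thus ?thesis using b unfolding jdiag_def by blast
  qed
qed

lemma jdI1: "z \<in> Z \<Longrightarrow> {z} \<in> r \<Longrightarrow> jdiag Z r"
  unfolding jdiag_def by (rule disjI1, rule bexI)

lemma jdI2: assumes "z1 \<in> Z" "z2 \<in> Z" "z1 \<noteq> z2" "B \<in> r" "z1 \<in> B" "z2 \<in> B" shows "jdiag Z r"
proof -
  have "\<exists>B\<in>r. z1 \<in> B \<and> z2 \<in> B" using assms(4-6) by blast
  hence "\<exists>z1\<in>Z. \<exists>z2\<in>Z. z1 \<noteq> z2 \<and> (\<exists>B\<in>r. z1 \<in> B \<and> z2 \<in> B)" using assms(1-3) by blast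
  thus ?thesis unfolding jdiag_def by (rule disjI2)
qed

lemma jd_rem: assumes "x \<notin> Z" "jdiag Z d" shows "jdiag Z (remx x d)"
proof -
  from assms(2) consider (a) z where "z \<in> Z" "{z} \<in> d"
    | (b) z1 z2 B where "z1 \<in> Z" "z2 \<in> Z" "z1 \<noteq> z2" "B \<in> d" "z1 \<in> B" "z2 \<in> B"
    unfolding jdiag_def by blast
  thus ?thesis
  proof cases
    case a
    have "z \<noteq> x" using a(1) assms(1) by blast
    hence "{z} \<noteq> {x}" "{z} = {z} - {x}" by auto
    hence "{z} \<in> {B \<in> d. B \<noteq> {x}}" "{z} = {z} - {x}" using a(2) by simp_all
    hence "{z} \<in> remx x d" unfolding remx_def by (rule rev_image_eqI)
    thus ?thesis using a(1) by (rule jdI1[rotated])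
  next
    case b
    have "B \<noteq> {x}"
    proof
      assume "B = {x}" hence "z1 = z2" using b(5,6) by simp
      thus False using b(3) by simp
    qed
    hence "B \<in> {B \<in> d. B \<noteq> {x}}" using b(4) by simp
    hence m: "B - {x} \<in> remx x d" unfolding remx_def by (rule imageI)
    have "z1 \<noteq> x" "z2 \<noteq> x" using b(1,2) assms(1) by blast+
    hence "z1 \<in> B - {x}" "z2 \<in> B - {x}" using b(5,6) by simp_all
    thus ?thesis using jdI2[OF b(1-3) m] by blast
  qed
qed

lemma eps_T: "eps (Tdiag n x) = 0"
proof -
  have "{x} \<in> Tdiag n x" by (simp add: Tdiag_def)
  moreover have "{x} \<noteq> {- i, j}" if "i > 0" "j > 0" for i j :: int using that by auto
  ultimately have "\<not> is_perm (Tdiag n x)" unfolding is_perm_def by blast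
  thus ?thesis by (simp add: eps_def)
qed

lemma eps_W: assumes d: "d \<in> diagrams n" and x: "x \<in> {1..int n}" and y: "y \<in> {1..int n}" and xy: "x \<noteq> y"
  shows "eps (Hx x y ` remx x d) = 0"
proof -
  have yn: "y \<in> nodes n" using y by (auto simp: nodes_iff)
  let ?B = "blk d y"
  have B: "?B \<in> d" "y \<in> ?B" using blk_mem[OF d yn] by auto
  hence "?B \<noteq> {x}" using xy by auto
  hence C: "?B - {x} \<in> remx x d" using B unfolding remx_def by blast
  have "Hx x y (?B - {x}) = insert x (?B - {x})" using B xy by (simp add: Hx_def)
  hence blk: "insert x (?B - {x}) \<in> Hx x y ` remx x d" using C by (metis image_eqI)
  have "insert x (?B - {x}) \<noteq> {- i, j}" if "i > 0" "j > 0" for i j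
  proof
    assume "insert x (?B - {x}) = {- i, j}"
    hence "x \<in> {-i,j}" "y \<in> {-i,j}" using B xy by auto
    thus False using that x y xy by auto
  qed
  hence "\<not> is_perm (Hx x y ` remx x d)" using blk unfolding is_perm_def by blast
  thus ?thesis by (simp add: eps_def)
qed

lemma comp_sum:
  assumes A: "finite A" and phi: "\<And>d. d \<in> A \<Longrightarrow> \<phi> d \<in> A"
  shows "(\<Sum>e\<in>A. if \<psi> e = f then (\<Sum>d\<in>A. if \<phi> d = e then u d else 0) * w e else (0::'r::comm_ring_1))
       = (\<Sum>d\<in>A. if \<psi> (\<phi> d) = f then u d * w (\<phi> d) else 0)"
proof -
  have "(\<Sum>e\<in>A. if \<psi> e = f then (\<Sum>d\<in>A. if \<phi> d = e then u d else 0) * w e else 0)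
      = (\<Sum>e\<in>A. \<Sum>d\<in>A. if \<phi> d = e \<and> \<psi> e = f then u d * w e else 0)"
  proof (rule sum.cong[OF refl])
    fix e assume "e \<in> A"
    show "(if \<psi> e = f then (\<Sum>d\<in>A. if \<phi> d = e then u d else 0) * w e else 0)
        = (\<Sum>d\<in>A. if \<phi> d = e \<and> \<psi> e = f then u d * w e else 0)"
      by (cases "\<psi> e = f") (auto simp: sum_distrib_right intro!: sum.cong)
  qed
  also have "\<dots> = (\<Sum>d\<in>A. \<Sum>e\<in>A. if \<phi> d = e \<and> \<psi> e = f then u d * w e else 0)"
    by (rule sum.swap)
  also have "\<dots> = (\<Sum>d\<in>A. if \<psi> (\<phi> d) = f then u d * w (\<phi> d) else 0)"
  proof (rule sum.cong[OF refl])
    fix d assume d: "d \<in> A"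
    have "(\<Sum>e\<in>A. if \<phi> d = e \<and> \<psi> e = f then u d * w e else 0)
        = (\<Sum>e\<in>A. if \<phi> d = e then (if \<psi> (\<phi> d) = f then u d * w (\<phi> d) else 0) else 0)"
      by (rule sum.cong[OF refl]) auto
    also have "\<dots> = (if \<psi> (\<phi> d) = f then u d * w (\<phi> d) else 0)"
      using A phi[OF d] by (simp add: sum.delta)
    finally show "(\<Sum>e\<in>A. if \<phi> d = e \<and> \<psi> e = f then u d * w e else 0) = (if \<psi> (\<phi> d) = f then u d * w (\<phi> d) else 0)" .
  qed
  finally show ?thesis .
qed

lemma sum_nz:
  assumes "(\<Sum>d\<in>A. if P d then g d else (0::'r::comm_ring_1)) \<noteq> 0"
  shows "\<exists>d\<in>A. P d \<and> g d \<noteq> 0"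
proof (rule ccontr)
  assume "\<not> ?thesis"
  hence "(\<Sum>d\<in>A. if P d then g d else (0::'r)) = 0" by (intro sum.neutral) auto
  thus False using assms by simp
qed

definition Lx :: "int \<Rightarrow> int set set \<Rightarrow> nat" where "Lx x d = (if {x} \<in> d then 1 else 0)"

context
  fixes n :: nat and x y :: int
  assumes x: "x \<in> {1..int n}" and y: "y \<in> {1..int n}" and xy: "x \<noteq> y"
begin

lemma dT_D: "d \<in> diagrams n \<Longrightarrow> insert {x} (remx x d) \<in> diagrams n"
  using dcomp_diagram[OF _ T_diag[OF x]] dcomp_T(1)[OF _ x] by metis

lemma dW_D: "d \<in> diagrams n \<Longrightarrow> Hx x y ` remx x d \<in> diagrams n"
  using dcomp_diagram[OF _ W_diag[OF x y xy]] dcomp_W(1)[OF _ x y xy] by metis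

lemma RT_formula: "pmult n \<delta> a (basis (Tdiag n x)) =
   (\<lambda>f. \<Sum>d\<in>diagrams n. if insert {x} (remx x d) = f then a d * \<delta> ^ Lx x d else 0)"
  unfolding pmult_basis_right[OF T_diag[OF x]]
  by (rule ext, rule sum.cong[OF refl]) (simp add: dcomp_T[OF _ x] Lx_def)

lemma RW_formula: "pmult n \<delta> a (basis (Wdiag n x y)) =
   (\<lambda>f. \<Sum>d\<in>diagrams n. if Hx x y ` remx x d = f then a d * \<delta> ^ Lx x d else 0)"
  unfolding pmult_basis_right[OF W_diag[OF x y xy]]
  by (rule ext, rule sum.cong[OF refl]) (simp add: dcomp_W[OF _ x y xy] Lx_def)

lemma TV_eq: "pmult n \<delta> (basis (Tdiag n x)) (basis (Vdiag n x y)) = basis (Wdiag n x y)"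
  unfolding pmult_basis_basis[OF T_diag[OF x] V_diag[OF x y xy]] dcomp_TV[OF x y xy]
  by (simp add: basis_def fun_eq_iff eq_commute)

lemma cdiff_eq: "cdiff n \<delta> x y k = (if odd k then psub (basis (idd n)) (basis (Wdiag n x y)) else basis (Wdiag n x y))"
  unfolding cdiff_def TV_eq ..

lemma Lx_W: "d \<in> diagrams n \<Longrightarrow> Lx x (Hx x y ` remx x d) = 0"
  using Hx_no_single[OF remx_props] by (simp add: Lx_def)

lemma remx_dT: "d \<in> diagrams n \<Longrightarrow> remx x (insert {x} (remx x d)) = remx x d"
  using remx_insert[OF remx_props] .

lemma remx_dW: "d \<in> diagrams n \<Longrightarrow> remx x (Hx x y ` remx x d) = remx x d"
  using remx_H[OF remx_props] .

lemma dT_eq: "d \<in> diagrams n \<Longrightarrow> d0 \<in> diagrams n \<Longrightarrow>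
   insert {x} (remx x d) = insert {x} (remx x d0) \<longleftrightarrow> remx x d = remx x d0"
  by (metis remx_dT)

lemma dW_eq: "d \<in> diagrams n \<Longrightarrow> d0 \<in> diagrams n \<Longrightarrow>
   Hx x y ` remx x d = Hx x y ` remx x d0 \<longleftrightarrow> remx x d = remx x d0"
  by (metis remx_dW)

definition Ssum :: "'r::comm_ring_1 \<Rightarrow> (int set set \<Rightarrow> 'r) \<Rightarrow> int set set \<Rightarrow> 'r" where
  "Ssum \<delta> a r = (\<Sum>d\<in>diagrams n. if remx x d = r then a d * \<delta> ^ Lx x d else 0)"

lemma RT_at: "d0 \<in> diagrams n \<Longrightarrow> pmult n \<delta> a (basis (Tdiag n x)) (insert {x} (remx x d0)) = Ssum \<delta> a (remx x d0)"
  unfolding RT_formula Ssum_def by (rule sum.cong[OF refl]) (simp add: dT_eq)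

lemma RW_at: "d0 \<in> diagrams n \<Longrightarrow> pmult n \<delta> a (basis (Wdiag n x y)) (Hx x y ` remx x d0) = Ssum \<delta> a (remx x d0)"
  unfolding RW_formula Ssum_def by (rule sum.cong[OF refl]) (simp add: dW_eq)

lemma RT_supp: "pmult n \<delta> a (basis (Tdiag n x)) f \<noteq> 0 \<Longrightarrow> \<exists>d\<in>diagrams n. insert {x} (remx x d) = f \<and> a d \<noteq> 0"
  unfolding RT_formula by (drule sum_nz) auto

lemma RW_supp: "pmult n \<delta> a (basis (Wdiag n x y)) f \<noteq> 0 \<Longrightarrow> \<exists>d\<in>diagrams n. Hx x y ` remx x d = f \<and> a d \<noteq> 0"
  unfolding RW_formula by (drule sum_nz) auto

end

lemma palg_zero: "(\<lambda>e. 0) \<in> palg n" by (simp add: palg_def)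
lemma palg_sub: "u \<in> palg n \<Longrightarrow> v \<in> palg n \<Longrightarrow> psub u v \<in> palg n" by (simp add: palg_def psub_def)
lemma palg_add: "u \<in> palg n \<Longrightarrow> v \<in> palg n \<Longrightarrow> padd u v \<in> palg n" by (simp add: palg_def padd_def)
lemma J_zero: "(\<lambda>e. 0) \<in> Jideal n Z" by (simp add: Jideal_def palg_def)
lemma J_sub: "u \<in> Jideal n Z \<Longrightarrow> v \<in> Jideal n Z \<Longrightarrow> psub u v \<in> Jideal n Z"
  unfolding Jideal_def psub_def palg_def by (auto, metis)
lemma J_add: "u \<in> Jideal n Z \<Longrightarrow> v \<in> Jideal n Z \<Longrightarrow> padd u v \<in> Jideal n Z"
  unfolding Jideal_def padd_def palg_def by (auto, metis add.left_neutral)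
lemma A_zero: "(\<lambda>e. 0) \<in> Aspan n x" by (simp add: Aspan_def palg_def)

context
  fixes n :: nat and x y :: int
  assumes x: "x \<in> {1..int n}" and y: "y \<in> {1..int n}" and xy: "x \<noteq> y"
begin

lemma RW_J: assumes Z: "x \<notin> Z" "y \<notin> Z" and j: "j \<in> Jideal n Z"
  shows "pmult n \<delta> j (basis (Wdiag n x y)) \<in> Jideal n Z"
proof -
  have "jdiag Z f" if nz: "pmult n \<delta> j (basis (Wdiag n x y)) f \<noteq> 0" for f
  proof -
    obtain d where d: "d \<in> diagrams n" "Hx x y ` remx x d = f" "j d \<noteq> 0" using RW_supp[OF x y xy nz] by blast
    have "jdiag Z d" using j d(3) by (auto simp: Jideal_def)
    hence "jdiag Z (remx x d)" by (rule jd_rem[OF Z(1)])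
    thus ?thesis using jd_H[OF Z] d(2) by blast
  qed
  thus ?thesis using pmult_basis_palg[OF W_diag[OF x y xy]] by (auto simp: Jideal_def)
qed

lemma RT_J_iff: assumes Z: "x \<notin> Z" "y \<notin> Z"
  shows "pmult n \<delta> a (basis (Tdiag n x)) \<in> Jideal n Z \<longleftrightarrow> pmult n \<delta> a (basis (Wdiag n x y)) \<in> Jideal n Z"
proof
  assume T: "pmult n \<delta> a (basis (Tdiag n x)) \<in> Jideal n Z"
  have "jdiag Z f" if nz: "pmult n \<delta> a (basis (Wdiag n x y)) f \<noteq> 0" for f
  proof -
    obtain d where d: "d \<in> diagrams n" "Hx x y ` remx x d = f" using RW_supp[OF x y xy nz] by blast
    have e1: "pmult n \<delta> a (basis (Wdiag n x y)) f = Ssum n x \<delta> a (remx x d)"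
      using RW_at[OF x y xy d(1), of \<delta> a] d(2) by simp
    have "pmult n \<delta> a (basis (Tdiag n x)) (insert {x} (remx x d)) \<noteq> 0"
      using nz e1 RT_at[OF x y xy d(1), of \<delta> a] by simp
    hence "jdiag Z (insert {x} (remx x d))" using T by (auto simp: Jideal_def)
    hence "jdiag Z (remx x d)" using jd_ins[OF Z(1)] by blast
    thus ?thesis using jd_H[OF Z] d(2) by blast
  qed
  thus "pmult n \<delta> a (basis (Wdiag n x y)) \<in> Jideal n Z"
    using pmult_basis_palg[OF W_diag[OF x y xy]] by (auto simp: Jideal_def)
next
  assume W: "pmult n \<delta> a (basis (Wdiag n x y)) \<in> Jideal n Z"
  have "jdiag Z f" if nz: "pmult n \<delta> a (basis (Tdiag n x)) f \<noteq> 0" for f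
  proof -
    obtain d where d: "d \<in> diagrams n" "insert {x} (remx x d) = f" using RT_supp[OF x y xy nz] by blast
    have e1: "pmult n \<delta> a (basis (Tdiag n x)) f = Ssum n x \<delta> a (remx x d)"
      using RT_at[OF x y xy d(1), of \<delta> a] d(2) by simp
    have "pmult n \<delta> a (basis (Wdiag n x y)) (Hx x y ` remx x d) \<noteq> 0"
      using nz e1 RW_at[OF x y xy d(1), of \<delta> a] by simp
    hence "jdiag Z (Hx x y ` remx x d)" using W by (auto simp: Jideal_def)
    hence "jdiag Z (remx x d)" using jd_H[OF Z] by blast
    thus ?thesis using jd_ins[OF Z(1)] d(2) by blast
  qed
  thus "pmult n \<delta> a (basis (Tdiag n x)) \<in> Jideal n Z"
    using pmult_basis_palg[OF T_diag[OF x]] by (auto simp: Jideal_def)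
qed

lemma RW_idem: "pmult n \<delta> (pmult n \<delta> b (basis (Wdiag n x y))) (basis (Wdiag n x y)) = pmult n \<delta> b (basis (Wdiag n x y))"
proof (rule ext)
  fix f
  let ?W = "\<lambda>d. Hx x y ` remx x d"
  have "pmult n \<delta> (pmult n \<delta> b (basis (Wdiag n x y))) (basis (Wdiag n x y)) f
     = (\<Sum>e\<in>diagrams n. if ?W e = f then (\<Sum>d\<in>diagrams n. if ?W d = e then b d * \<delta> ^ Lx x d else 0) * \<delta> ^ Lx x e else 0)"
    unfolding RW_formula[OF x y xy] ..
  also have "\<dots> = (\<Sum>d\<in>diagrams n. if ?W (?W d) = f then (b d * \<delta> ^ Lx x d) * \<delta> ^ Lx x (?W d) else 0)"
    by (rule comp_sum[OF finite_diagrams dW_D[OF x y xy]])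
  also have "\<dots> = (\<Sum>d\<in>diagrams n. if ?W d = f then b d * \<delta> ^ Lx x d else 0)"
  proof (rule sum.cong[OF refl])
    fix d assume d: "d \<in> diagrams n"
    have e1: "?W (?W d) = ?W d" using remx_dW[OF x y xy d] by simp
    have e2: "Lx x (?W d) = 0" using Lx_W[OF x y xy d] .
    show "(if ?W (?W d) = f then (b d * \<delta> ^ Lx x d) * \<delta> ^ Lx x (?W d) else 0)
      = (if ?W d = f then b d * \<delta> ^ Lx x d else 0)" unfolding e1 e2 by simp
  qed
  also have "\<dots> = pmult n \<delta> b (basis (Wdiag n x y)) f"
    unfolding RW_formula[OF x y xy] ..
  finally show "pmult n \<delta> (pmult n \<delta> b (basis (Wdiag n x y))) (basis (Wdiag n x y)) f = pmult n \<delta> b (basis (Wdiag n x y)) f" .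
qed

lemma RT_A: "pmult n \<delta> a (basis (Tdiag n x)) \<in> Aspan n x"
proof -
  have "{x} \<in> f" if nz: "pmult n \<delta> a (basis (Tdiag n x)) f \<noteq> 0" for f
    using RT_supp[OF x y xy nz] by blast
  thus ?thesis using pmult_basis_palg[OF T_diag[OF x]] by (auto simp: Aspan_def)
qed

lemma surj_T: assumes c: "c \<in> Aspan n x"
  shows "\<exists>a\<in>palg n. pmult n \<delta> a (basis (Tdiag n x)) = c"
proof -
  let ?W = "\<lambda>d. Hx x y ` remx x d"
  let ?T = "\<lambda>d. insert {x} (remx x d)"
  define a where "a = (\<lambda>d. \<Sum>e\<in>diagrams n. if ?W e = d then c e else 0)"
  have ap: "a \<in> palg n"
  proof -
    have "a d = 0" if "d \<notin> diagrams n" for d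
    proof (rule ccontr)
      assume "a d \<noteq> 0"
      hence "\<exists>e\<in>diagrams n. ?W e = d \<and> c e \<noteq> 0" unfolding a_def by (rule sum_nz)
      then obtain e where "e \<in> diagrams n" "?W e = d" by blast
      thus False using dW_D[OF x y xy] that by metis
    qed
    thus ?thesis by (auto simp: palg_def)
  qed
  have "pmult n \<delta> a (basis (Tdiag n x)) = c"
  proof (rule ext)
    fix f
    have "pmult n \<delta> a (basis (Tdiag n x)) f
       = (\<Sum>e\<in>diagrams n. if ?T e = f then (\<Sum>d\<in>diagrams n. if ?W d = e then c d else 0) * \<delta> ^ Lx x e else 0)"
      unfolding RT_formula[OF x y xy] a_def ..
    also have "\<dots> = (\<Sum>d\<in>diagrams n. if ?T (?W d) = f then c d * \<delta> ^ Lx x (?W d) else 0)"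
      by (rule comp_sum[OF finite_diagrams dW_D[OF x y xy]])
    also have "\<dots> = (\<Sum>d\<in>diagrams n. if d = f then c d else 0)"
    proof (rule sum.cong[OF refl])
      fix d assume d: "d \<in> diagrams n"
      show "(if ?T (?W d) = f then c d * \<delta> ^ Lx x (?W d) else 0) = (if d = f then c d else 0)"
      proof (cases "c d = 0")
        case True thus ?thesis by (simp only: True mult_zero_left if_cancel)
      next
        case False
        hence "{x} \<in> d" using c by (auto simp: Aspan_def)
        hence "?T d = d" by (rule T_fix[OF d])
        hence e1: "?T (?W d) = d" using remx_dW[OF x y xy d] by simp
        have e2: "Lx x (?W d) = 0" using Lx_W[OF x y xy d] .
        show ?thesis unfolding e1 e2 by simp
      qed
    qed
    also have "\<dots> = c f"
      using c finite_diagrams by (auto simp: sum.delta' Aspan_def palg_def)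
    finally show "pmult n \<delta> a (basis (Tdiag n x)) f = c f" .
  qed
  thus ?thesis using ap by blast
qed

end

lemma psub_self: "psub a a = (\<lambda>e. 0)" by (simp add: psub_def)
lemma psub_psub_self: "psub a (psub a v) = v" by (simp add: psub_def)
lemma psub_zero: "psub c (\<lambda>e. 0) = c" by (simp add: psub_def)
lemma padd_zero: "padd (\<lambda>e. 0) v = v" by (simp add: padd_def)
lemma psub_cancel: "psub (psub a v) (psub u v) = psub a u" by (simp add: psub_def fun_eq_iff)

definition Gen :: "nat \<Rightarrow> 'r::comm_ring_1 \<Rightarrow> (int set set \<Rightarrow> 'r) set \<Rightarrow> (int set set \<Rightarrow> 'r) set" where
  "Gen n \<delta> M = {psub (pmult n \<delta> (basis d) m) (\<lambda>e. eps d * m e) | d m. d \<in> diagrams n \<and> m \<in> M}"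

lemma GenI: "d \<in> diagrams n \<Longrightarrow> m \<in> M \<Longrightarrow> psub (pmult n \<delta> (basis d) m) (\<lambda>e. eps d * m e) \<in> Gen n \<delta> M"
  unfolding Gen_def by auto

lemma spI: "a \<in> A \<Longrightarrow> b \<in> B \<Longrightarrow> padd a b \<in> setplus A B"
  unfolding setplus_def by auto

lemma tensor1_eq: "tensor1 n \<delta> (M, N) = (M, setplus N (rspan (Gen n \<delta> M)))"
  by (simp add: tensor1_def Gen_def)

lemma sp_right: "(\<lambda>e. 0) \<in> A \<Longrightarrow> v \<in> B \<Longrightarrow> v \<in> setplus A B"
  using spI[of "\<lambda>e. 0" A v B] by (simp add: padd_zero)

lemma sp_sub:
  assumes cA: "\<And>u v. u \<in> A \<Longrightarrow> v \<in> A \<Longrightarrow> psub u v \<in> A"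
    and u: "u \<in> setplus A (rspan S)" and v: "v \<in> setplus A (rspan S)"
  shows "psub u v \<in> setplus A (rspan S)"
proof -
  obtain a1 b1 where 1: "u = padd a1 b1" "a1 \<in> A" "b1 \<in> rspan S" using u unfolding setplus_def mem_Collect_eq by (elim exE conjE) simp
  obtain a2 b2 where 2: "v = padd a2 b2" "a2 \<in> A" "b2 \<in> rspan S" using v unfolding setplus_def mem_Collect_eq by (elim exE conjE) simp
  have "psub u v = padd (psub a1 a2) (psub b1 b2)" using 1 2 by (simp add: psub_def padd_def fun_eq_iff)
  moreover have "psub a1 a2 \<in> A" using cA 1(2) 2(2) by blast
  moreover have "psub b1 b2 \<in> rspan S" using rspan_sub 1(3) 2(3) by blast
  ultimately show ?thesis using spI by metis
qed

context
  fixes n :: nat and x y :: int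
  assumes x: "x \<in> {1..int n}" and y: "y \<in> {1..int n}" and xy: "x \<noteq> y"
begin

lemma basisW_G: "basis (Wdiag n x y) \<in> rspan (Gen n \<delta> (palg n))"
proof -
  have "psub (pmult n \<delta> (basis (Tdiag n x)) (basis (Vdiag n x y))) (\<lambda>e. eps (Tdiag n x) * basis (Vdiag n x y) e)
      \<in> Gen n \<delta> (palg n)"
    by (rule GenI[OF T_diag[OF x] basis_palg[OF V_diag[OF x y xy]]])
  moreover have "psub (pmult n \<delta> (basis (Tdiag n x)) (basis (Vdiag n x y))) (\<lambda>e. eps (Tdiag n x) * basis (Vdiag n x y) e)
      = basis (Wdiag n x y)"
    unfolding TV_eq[OF x y xy] eps_T by (simp add: psub_def)
  ultimately show ?thesis using rspan_gen by metis
qed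

lemma RW_G: assumes a: "a \<in> palg n"
  shows "pmult n \<delta> a (basis (Wdiag n x y)) \<in> rspan (Gen n \<delta> (palg n))"
proof -
  have v: "pmult n \<delta> (basis d) (basis (Wdiag n x y)) \<in> rspan (Gen n \<delta> (palg n))" if d: "d \<in> diagrams n" for d
  proof -
    let ?v = "pmult n \<delta> (basis d) (basis (Wdiag n x y))"
    let ?s = "\<lambda>e. eps d * basis (Wdiag n x y) e"
    have "psub ?v ?s \<in> Gen n \<delta> (palg n)"
      by (rule GenI[OF d basis_palg[OF W_diag[OF x y xy]]])
    hence g: "psub ?v ?s \<in> rspan (Gen n \<delta> (palg n))" by (rule rspan_gen)
    have sc: "?s \<in> rspan (Gen n \<delta> (palg n))" by (rule rspan_scale[OF basisW_G])
    have e: "padd (psub ?v ?s) ?s = ?v" unfolding padd_def psub_def by simp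
    from rspan_add[OF g sc] show ?thesis unfolding e .
  qed
  show ?thesis
    by (subst pmult_lin_basis[OF W_diag[OF x y xy]], rule rspan_sum[OF finite_diagrams v])
qed

lemma basisT_A: "basis (Tdiag n x) \<in> Aspan n x"
proof -
  have "{x} \<in> Tdiag n x" by (simp add: Tdiag_def)
  thus ?thesis using basis_palg[OF T_diag[OF x]] unfolding Aspan_def basis_def by auto
qed

lemma Aspan_G: assumes c: "c \<in> Aspan n x"
  shows "c \<in> rspan (Gen n \<delta> (Aspan n x))"
proof -
  have cp: "c \<in> palg n" using c by (simp add: Aspan_def)
  have eq: "c = (\<lambda>f. \<Sum>e\<in>diagrams n. c e * basis e f)"
  proof (rule ext)
    fix f
    have "(\<Sum>e\<in>diagrams n. c e * basis e f) = (\<Sum>e\<in>diagrams n. if e = f then c e else 0)"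
      by (rule sum.cong[OF refl]) (simp add: basis_def)
    also have "\<dots> = c f" using cp finite_diagrams by (auto simp: sum.delta' palg_def)
    finally show "c f = (\<Sum>e\<in>diagrams n. c e * basis e f)" by simp
  qed
  have v: "basis e \<in> rspan (Gen n \<delta> (Aspan n x))" if e: "e \<in> diagrams n" "c e \<noteq> 0" for e
  proof -
    let ?p = "Hx x y ` remx x e"
    have p: "?p \<in> diagrams n" using dW_D[OF x y xy e(1)] .
    have ex: "{x} \<in> e" using c e(2) by (auto simp: Aspan_def)
    have "dcomp n ?p (Tdiag n x) = insert {x} (remx x ?p)" by (rule dcomp_T(1)[OF p x])
    also have "remx x ?p = remx x e" by (rule remx_dW[OF x y xy e(1)])
    also have "insert {x} (remx x e) = e" by (rule T_fix[OF e(1) ex])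
    finally have dc: "dcomp n ?p (Tdiag n x) = e" .
    have "dloops n ?p (Tdiag n x) = Lx x ?p" unfolding Lx_def by (rule dcomp_T(2)[OF p x])
    hence dl: "dloops n ?p (Tdiag n x) = 0" using Lx_W[OF x y xy e(1)] by simp
    have pm: "pmult n \<delta> (basis ?p) (basis (Tdiag n x)) = basis e"
      unfolding pmult_basis_basis[OF p T_diag[OF x]] dc dl by (unfold basis_def, rule ext) auto
    have ep: "eps ?p = 0" using eps_W[OF e(1) x y xy] .
    have "psub (pmult n \<delta> (basis ?p) (basis (Tdiag n x))) (\<lambda>f. eps ?p * basis (Tdiag n x) f) = basis e"
      unfolding pm ep psub_def by simp
    moreover have "psub (pmult n \<delta> (basis ?p) (basis (Tdiag n x))) (\<lambda>f. eps ?p * basis (Tdiag n x) f) \<in> Gen n \<delta> (Aspan n x)"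
      by (rule GenI[OF p basisT_A])
    ultimately show ?thesis using rspan_gen by metis
  qed
  show ?thesis by (subst eq, rule rspan_sum[OF finite_diagrams v])
qed

end

theorem proposition4p9:
  fixes \<delta> :: "'r::comm_ring_1" and n :: nat and X :: "int set" and x y :: int
  assumes "X \<subseteq> {1 .. int n}" and "card X < n" and "x \<in> X"
    and "y \<in> {1 .. int n} - X" and "n \<ge> 2"
  shows "aug_exact n \<delta> (palg n, Jideal n (X - {x}))
           (Aspan n x, Aspan n x \<inter> Jideal n (X - {x}))
           (cdiff n \<delta> x y) (basis (Tdiag n x))
       \<and> aug_exact n \<delta> (tensor1 n \<delta> (palg n, Jideal n (X - {x})))
           (tensor1 n \<delta> (Aspan n x, Aspan n x \<inter> Jideal n (X - {x})))
           (cdiff n \<delta> x y) (basis (Tdiag n x))"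
proof -
  have x: "x \<in> {1..int n}" using assms(1,3) by blast
  have y: "y \<in> {1..int n}" using assms(4) by blast
  have xy: "x \<noteq> y" using assms(3,4) by blast
  let ?Z = "X - {x}"
  let ?J = "Jideal n ?Z"
  have Zx: "x \<notin> ?Z" and Zy: "y \<notin> ?Z" using assms(4) by auto
  define RT where "RT = (\<lambda>a. pmult n \<delta> a (basis (Tdiag n x)))"
  define RW where "RW = (\<lambda>a. pmult n \<delta> a (basis (Wdiag n x y)))"
  have cd_odd: "pmult n \<delta> a (cdiff n \<delta> x y k) = psub a (RW a)" if "odd k" "a \<in> palg n" for a k
    unfolding cdiff_eq[OF x y xy] RW_def using that by (simp add: pmult_psub_right pmult_idd)
  have cd_even: "pmult n \<delta> a (cdiff n \<delta> x y k) = RW a" if "even k" for a k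
    unfolding cdiff_eq[OF x y xy] RW_def using that by simp
  have RW_sub: "RW (psub u v) = psub (RW u) (RW v)" for u v unfolding RW_def by (rule pmult_psub_left)
  have RW_id: "RW (RW b) = RW b" for b unfolding RW_def by (rule RW_idem[OF x y xy])
  have RWJ: "j \<in> ?J \<Longrightarrow> RW j \<in> ?J" for j unfolding RW_def by (rule RW_J[OF x y xy Zx Zy])
  have RWp: "RW a \<in> palg n" for a unfolding RW_def by (rule pmult_basis_palg[OF W_diag[OF x y xy]])
  have E: "(\<exists>b\<in>palg n. psub a (psub b (RW b)) \<in> ?J) \<longleftrightarrow> RW a \<in> ?J" if a: "a \<in> palg n" for a
  proof
    assume "\<exists>b\<in>palg n. psub a (psub b (RW b)) \<in> ?J"
    then obtain b where b: "b \<in> palg n" "psub a (psub b (RW b)) \<in> ?J" by blast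
    have "RW (psub a (psub b (RW b))) = psub (RW a) (psub (RW b) (RW b))"
      unfolding RW_sub RW_id ..
    also have "\<dots> = RW a" by (simp add: psub_def)
    finally show "RW a \<in> ?J" using RWJ[OF b(2)] by simp
  next
    assume "RW a \<in> ?J"
    moreover have "psub a (psub a (RW a)) = RW a" by (rule psub_psub_self)
    ultimately show "\<exists>b\<in>palg n. psub a (psub b (RW b)) \<in> ?J" using a by metis
  qed
  have E': "(\<exists>b\<in>palg n. psub a (RW b) \<in> ?J) \<longleftrightarrow> psub a (RW a) \<in> ?J" if a: "a \<in> palg n" for a
  proof
    assume "\<exists>b\<in>palg n. psub a (RW b) \<in> ?J"
    then obtain b where b: "b \<in> palg n" "psub a (RW b) \<in> ?J" by blast
    have "RW (psub a (RW b)) = psub (RW a) (RW b)" unfolding RW_sub RW_id ..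
    hence "psub (psub a (RW b)) (RW (psub a (RW b))) = psub a (RW a)" by (simp add: psub_cancel)
    moreover have "psub (psub a (RW b)) (RW (psub a (RW b))) \<in> ?J" using J_sub[OF b(2) RWJ[OF b(2)]] .
    ultimately show "psub a (RW a) \<in> ?J" by simp
  next
    assume "psub a (RW a) \<in> ?J" thus "\<exists>b\<in>palg n. psub a (RW b) \<in> ?J" using a by blast
  qed
  have part1: "aug_exact n \<delta> (palg n, ?J) (Aspan n x, Aspan n x \<inter> ?J) (cdiff n \<delta> x y) (basis (Tdiag n x))"
    unfolding aug_exact_def fst_conv snd_conv
  proof (intro conjI ballI allI impI)
    fix c :: "int set set \<Rightarrow> 'r" assume c: "c \<in> Aspan n x"
    obtain a where a: "a \<in> palg n" "pmult n \<delta> a (basis (Tdiag n x)) = c" using surj_T[OF x y xy c] by blast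
    have e0: "psub c (pmult n \<delta> a (basis (Tdiag n x))) = (\<lambda>e. 0)" unfolding a(2) by (rule psub_self)
    have "psub c (pmult n \<delta> a (basis (Tdiag n x))) \<in> Aspan n x \<inter> ?J" unfolding e0 by (rule IntI[OF A_zero J_zero])
    thus "\<exists>a\<in>palg n. psub c (pmult n \<delta> a (basis (Tdiag n x))) \<in> Aspan n x \<inter> ?J" using a(1) by blast
  next
    show "{a \<in> palg n. pmult n \<delta> a (basis (Tdiag n x)) \<in> Aspan n x \<inter> ?J} =
          {a \<in> palg n. \<exists>b\<in>palg n. psub a (pmult n \<delta> b (cdiff n \<delta> x y 1)) \<in> ?J}"
    proof (rule Collect_cong)
      fix a
      show "(a \<in> palg n \<and> pmult n \<delta> a (basis (Tdiag n x)) \<in> Aspan n x \<inter> ?J) =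
            (a \<in> palg n \<and> (\<exists>b\<in>palg n. psub a (pmult n \<delta> b (cdiff n \<delta> x y 1)) \<in> ?J))"
      proof (cases "a \<in> palg n")
        case True
        have "pmult n \<delta> a (basis (Tdiag n x)) \<in> Aspan n x \<inter> ?J \<longleftrightarrow> RW a \<in> ?J"
          using RT_A[OF x y xy, of \<delta> a] RT_J_iff[OF x y xy Zx Zy, of \<delta> a] unfolding RW_def by blast
        also have "\<dots> \<longleftrightarrow> (\<exists>b\<in>palg n. psub a (psub b (RW b)) \<in> ?J)" using E[OF True] by simp
        also have "\<dots> \<longleftrightarrow> (\<exists>b\<in>palg n. psub a (pmult n \<delta> b (cdiff n \<delta> x y 1)) \<in> ?J)"
          using cd_odd[of 1] by simp
        finally show ?thesis using True by simp
      qed simp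
    qed
  next
    fix k :: nat assume k: "k \<ge> 1"
    show "{a \<in> palg n. pmult n \<delta> a (cdiff n \<delta> x y k) \<in> ?J} =
          {a \<in> palg n. \<exists>b\<in>palg n. psub a (pmult n \<delta> b (cdiff n \<delta> x y (Suc k))) \<in> ?J}"
    proof (rule Collect_cong)
      fix a
      show "(a \<in> palg n \<and> pmult n \<delta> a (cdiff n \<delta> x y k) \<in> ?J) =
            (a \<in> palg n \<and> (\<exists>b\<in>palg n. psub a (pmult n \<delta> b (cdiff n \<delta> x y (Suc k))) \<in> ?J))"
      proof (cases "a \<in> palg n")
        case True
        show ?thesis
        proof (cases "odd k")
          case odd: True
          have "(\<exists>b\<in>palg n. psub a (pmult n \<delta> b (cdiff n \<delta> x y (Suc k))) \<in> ?J) \<longleftrightarrow>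
                (\<exists>b\<in>palg n. psub a (RW b) \<in> ?J)" using cd_even[of "Suc k"] odd by simp
          thus ?thesis using E'[OF True] cd_odd[OF odd True] True by simp
        next
          case even: False
          have "(\<exists>b\<in>palg n. psub a (pmult n \<delta> b (cdiff n \<delta> x y (Suc k))) \<in> ?J) \<longleftrightarrow>
                (\<exists>b\<in>palg n. psub a (psub b (RW b)) \<in> ?J)"
            using cd_odd[of "Suc k"] even by auto
          thus ?thesis using E[OF True] cd_even[of k a] even True by simp
        qed
      qed simp
    qed
  qed
  let ?SC = "setplus ?J (rspan (Gen n \<delta> (palg n)))"
  let ?SA = "setplus (Aspan n x \<inter> ?J) (rspan (Gen n \<delta> (Aspan n x)))"
  have SCsub: "u \<in> ?SC \<Longrightarrow> v \<in> ?SC \<Longrightarrow> psub u v \<in> ?SC" for u v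
    by (rule sp_sub[OF J_sub])
  have RWSC: "RW a \<in> ?SC" if "a \<in> palg n" for a
    unfolding RW_def by (rule sp_right[OF J_zero RW_G[OF x y xy that]])
  have ASA: "c \<in> ?SA" if "c \<in> Aspan n x" for c
    by (rule sp_right) (use A_zero J_zero Aspan_G[OF x y xy that] in auto)
  have part2: "aug_exact n \<delta> (palg n, ?SC) (Aspan n x, ?SA) (cdiff n \<delta> x y) (basis (Tdiag n x))"
    unfolding aug_exact_def fst_conv snd_conv
  proof (intro conjI ballI allI impI)
    fix c :: "int set set \<Rightarrow> 'r" assume c: "c \<in> Aspan n x"
    have "psub c (pmult n \<delta> (\<lambda>e. 0) (basis (Tdiag n x))) = c" unfolding pmult_zero_left by (rule psub_zero)
    thus "\<exists>a\<in>palg n. psub c (pmult n \<delta> a (basis (Tdiag n x))) \<in> ?SA"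
      using ASA[OF c] palg_zero by metis
  next
    have L: "pmult n \<delta> a (basis (Tdiag n x)) \<in> ?SA" for a by (rule ASA[OF RT_A[OF x y xy]])
    have R: "\<exists>b\<in>palg n. psub a (pmult n \<delta> b (cdiff n \<delta> x y 1)) \<in> ?SC" if a: "a \<in> palg n" for a
    proof -
      have "psub a (pmult n \<delta> a (cdiff n \<delta> x y 1)) = RW a" using cd_odd[of 1 a] a by (simp add: psub_psub_self)
      thus ?thesis using RWSC[OF a] a by metis
    qed
    show "{a \<in> palg n. pmult n \<delta> a (basis (Tdiag n x)) \<in> ?SA} =
          {a \<in> palg n. \<exists>b\<in>palg n. psub a (pmult n \<delta> b (cdiff n \<delta> x y 1)) \<in> ?SC}"
      using L R by blast
  next
    fix k :: nat assume k: "k \<ge> 1"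
    show "{a \<in> palg n. pmult n \<delta> a (cdiff n \<delta> x y k) \<in> ?SC} =
          {a \<in> palg n. \<exists>b\<in>palg n. psub a (pmult n \<delta> b (cdiff n \<delta> x y (Suc k))) \<in> ?SC}"
    proof (rule Collect_cong)
      fix a
      show "(a \<in> palg n \<and> pmult n \<delta> a (cdiff n \<delta> x y k) \<in> ?SC) =
            (a \<in> palg n \<and> (\<exists>b\<in>palg n. psub a (pmult n \<delta> b (cdiff n \<delta> x y (Suc k))) \<in> ?SC))"
      proof (cases "a \<in> palg n")
        case True
        show ?thesis
        proof (cases "odd k")
          case odd: True
          have 1: "(\<exists>b\<in>palg n. psub a (pmult n \<delta> b (cdiff n \<delta> x y (Suc k))) \<in> ?SC) \<longleftrightarrow>
                (\<exists>b\<in>palg n. psub a (RW b) \<in> ?SC)" using cd_even[of "Suc k"] odd by simp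
          have 2: "(\<exists>b\<in>palg n. psub a (RW b) \<in> ?SC) \<longleftrightarrow> psub a (RW a) \<in> ?SC"
          proof
            assume "\<exists>b\<in>palg n. psub a (RW b) \<in> ?SC"
            then obtain b where b: "b \<in> palg n" "psub a (RW b) \<in> ?SC" by blast
            have "psub (psub a (RW b)) (psub (RW a) (RW b)) \<in> ?SC"
              by (rule SCsub[OF b(2) SCsub[OF RWSC[OF True] RWSC[OF b(1)]]])
            thus "psub a (RW a) \<in> ?SC" by (simp add: psub_cancel)
          next
            assume "psub a (RW a) \<in> ?SC" thus "\<exists>b\<in>palg n. psub a (RW b) \<in> ?SC" using True by blast
          qed
          show ?thesis using 1 2 cd_odd[OF odd True] True by simp
        next
          case even: False
          have "psub a (pmult n \<delta> a (cdiff n \<delta> x y (Suc k))) = RW a"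
            using cd_odd[of "Suc k" a] even True by (simp add: psub_psub_self)
          hence "\<exists>b\<in>palg n. psub a (pmult n \<delta> b (cdiff n \<delta> x y (Suc k))) \<in> ?SC"
            using RWSC[OF True] True by metis
          moreover have "pmult n \<delta> a (cdiff n \<delta> x y k) \<in> ?SC" using cd_even[of k a] even RWSC[OF True] by simp
          ultimately show ?thesis using True by simp
        qed
      qed simp
    qed
  qed
  show ?thesis unfolding tensor1_eq using part1 part2 by blast
qed


end
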